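(* Let $E$ be a real-valued function on $k$-partite pure states that is fully additive, monotone on average under LOCC, and satisfies $E(\mathrm{GHZ})=1$. Then for all $k$-partite state vectors $\varphi,\psi$ and all $p\in[0,1]$, \[ E(\sqrt{p}\,\varphi\oplus\sqrt{1-p}\,\psi)\ge pE(\varphi)+(1-p)E(\psi)+h(p). \]
   Context: Logs base 2; $h(p)=-p\log p-(1-p)\log(1-p)$. For $\varphi\in\mathcal{H}_1\otimes\cdots\otimes\mathcal{H}_k$ and $\psi\in\mathcal{K}_1\otimes\cdots\otimes\mathcal{K}_k$, the direct sum $a\varphi\oplus b\psi$ is the vector $a\varphi+b\psi$ in $(\mathcal{H}_1\oplus\mathcal{K}_1)\otimes\cdots\otimes(\mathcal{H}_k\oplus\mathcal{K}_k)$, which contains $\mathcal{H}$ and $\mathcal{K}$ as orthogonal subspaces (a superposition of locally orthogonal vectors). We write $E(\varphi)$ for $E(|\varphi\rangle\langle\varphi|)$; $E$ is defined on pure states of arbitrary finite local dimensions. $\mathrm{GHZ}$ has vector $2^{-1/2}(|0\ldots0\rangle+|1\ldots1\rangle)$. Fully additive: $E(\varphi\otimes\psi)=E(\varphi)+E(\psi)$ (tensor factors grouped per party). Monotone on average under LOCC: whenever an LOCC channel maps $|\varphi\rangle\langle\varphi|$ to $\sum_{x\in\mathcal{X}}P(x)|x\rangle\langle x|\otimes|\varphi_x\rangle\langle\varphi_x|$ (finite $\mathcal{X}$, classical flag $x$ known to all parties), then $E(\varphi)\ge\sum_xP(x)E(\varphi_x)$. *)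

theory Defs
  imports Complex_Main
begin

text \<open>A k-partite system with local dimensions d_1..d_k is given by the
list d (length k). Basis vectors are indexed by multi-indices i (lists of length k
with i!j < d!j). A vector is a function from multi-indices to complex numbers that
vanishes outside the basis; an operator is a complex matrix indexed by pairs of
multi-indices.\<close>

type_synonym mvec = "nat list \<Rightarrow> complex"
type_synonym mop = "nat list \<Rightarrow> nat list \<Rightarrow> complex"

definition basis :: "nat list \<Rightarrow> nat list set" where
  "basis d = {i. length i = length d \<and> (\<forall>j<length d. i ! j < d ! j)}"

definition is_state :: "nat list \<Rightarrow> mvec \<Rightarrow> bool" where
  "is_state d \<phi> \<longleftrightarrow> (\<forall>i. i \<notin> basis d \<longrightarrow> \<phi> i = 0) \<and>
     (\<Sum>i\<in>basis d. (cmod (\<phi> i))\<^sup>2) = 1"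

definition proj :: "mvec \<Rightarrow> mop" where
  "proj \<phi> = (\<lambda>i i'. \<phi> i * cnj (\<phi> i'))"

text \<open>Tensor product with factors grouped per party: the local space of party j is
C^(d_j) (x) C^(d'_j), basis index a*d'_j + b.\<close>
definition tensor_dims :: "nat list \<Rightarrow> nat list \<Rightarrow> nat list" where
  "tensor_dims d d' = map2 (*) d d'"

definition tensor :: "nat list \<Rightarrow> nat list \<Rightarrow> mvec \<Rightarrow> mvec \<Rightarrow> mvec" where
  "tensor d d' \<phi> \<psi> = (\<lambda>i. if i \<in> basis (tensor_dims d d')
      then \<phi> (map2 (div) i d') * \<psi> (map2 (mod) i d') else 0)"

text \<open>Direct sum: the local space of party j is C^(d_j) (+) C^(d'_j), the first
summand occupying indices < d_j.  dsum d d' a phi b psi is the vector a phi + b psi.\<close>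
definition dsum_dims :: "nat list \<Rightarrow> nat list \<Rightarrow> nat list" where
  "dsum_dims d d' = map2 (+) d d'"

definition dsum :: "nat list \<Rightarrow> nat list \<Rightarrow> complex \<Rightarrow> mvec \<Rightarrow> complex \<Rightarrow> mvec \<Rightarrow> mvec" where
  "dsum d d' a \<phi> b \<psi> = (\<lambda>i. if i \<in> basis (dsum_dims d d') then
      (if (\<forall>j<length d. i ! j < d ! j) then a * \<phi> i
       else if (\<forall>j<length d. d ! j \<le> i ! j) then b * \<psi> (map2 (-) i d)
       else 0)
    else 0)"

definition ghz :: "nat \<Rightarrow> mvec" where
  "ghz k = (\<lambda>i. if i = replicate k 0 \<or> i = replicate k 1
                then complex_of_real (1 / sqrt 2) else 0)"

text \<open>Binary entropy, logs base 2 (the terms with p = 0 vanish since 0 * x = 0).\<close>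
definition h :: "real \<Rightarrow> real" where
  "h p = - p * log 2 p - (1 - p) * log 2 (1 - p)"

text \<open>Local completely positive map at party j, given by Kraus operators A r
(r < N), each an e x dj matrix (row, column), applied as (A r (x) I):
rho |-> sum_r (A r (x) I) rho (A r (x) I)^dagger.  D' are the output dimensions.\<close>
definition local_op :: "nat list \<Rightarrow> nat \<Rightarrow> nat \<Rightarrow> nat \<Rightarrow> (nat \<Rightarrow> nat \<Rightarrow> nat \<Rightarrow> complex) \<Rightarrow> mop \<Rightarrow> mop" where
  "local_op D' j dj N A \<rho> = (\<lambda>i i'. if i \<in> basis D' \<and> i' \<in> basis D' then
      (\<Sum>r<N. \<Sum>a<dj. \<Sum>b<dj. A r (i ! j) a * \<rho> (i[j := a]) (i'[j := b]) * cnj (A r (i' ! j) b))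
    else 0)"

text \<open>A local instrument C^dj -> C^e with outcome set M: for outcome m, Kraus operators
A m r (r < N m); trace preservation: sum over m, r of (A m r)^dagger (A m r) = I.\<close>
definition local_instrument :: "nat \<Rightarrow> nat \<Rightarrow> nat set \<Rightarrow> (nat \<Rightarrow> nat) \<Rightarrow> (nat \<Rightarrow> nat \<Rightarrow> nat \<Rightarrow> nat \<Rightarrow> complex) \<Rightarrow> bool" where
  "local_instrument dj e M N A \<longleftrightarrow> finite M \<and>
     (\<forall>a<dj. \<forall>b<dj. (\<Sum>m\<in>M. \<Sum>r<N m. \<Sum>c<e. cnj (A m r c a) * A m r c b) = (if a = b then 1 else 0))"

text \<open>Finite-round LOCC instruments. locc d d' T L: from dimensions d to dimensions d',
with (finite) set T of classical transcripts; L t is the (trace non-increasing) CP map of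
branch t.  In each round one party j performs a local instrument, whose outcome m is
broadcast; the rest of the protocol may depend on m.\<close>
inductive locc :: "nat list \<Rightarrow> nat list \<Rightarrow> nat list set \<Rightarrow> (nat list \<Rightarrow> mop \<Rightarrow> mop) \<Rightarrow> bool" where
  locc_id: "locc d d {[]} (\<lambda>_ \<rho>. \<rho>)"
| locc_step: "\<lbrakk> j < length d; local_instrument (d ! j) e M N A;
     \<And>m. m \<in> M \<Longrightarrow> locc (d[j := e]) d' (Y m) (L m) \<rbrakk> \<Longrightarrow>
   locc d d' (\<Union>m\<in>M. (\<lambda>y. m # y) ` Y m)
     (\<lambda>t \<rho>. L (hd t) (tl t) (local_op (d[j := e]) j (d ! j) (N (hd t)) (A (hd t)) \<rho>))"

end

theory Submission
  imports Defs
begin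


lemma finite_basis: "finite (basis d)"
proof -
  have "basis d \<subseteq> {xs. set xs \<subseteq> {..<sum_list d} \<and> length xs = length d}"
  proof
    fix i assume "i \<in> basis d"
    hence l: "length i = length d" and lt: "\<forall>j<length d. i!j < d!j" by (auto simp: basis_def)
    have "set i \<subseteq> {..<sum_list d}"
    proof
      fix x assume "x \<in> set i"
      then obtain j where "j < length i" "x = i!j" by (auto simp: in_set_conv_nth)
      moreover have "d!j \<le> sum_list d" using l \<open>j < length i\<close> by (simp add: elem_le_sum_list)
      ultimately show "x \<in> {..<sum_list d}" using lt l by fastforce
    qed
    thus "i \<in> {xs. set xs \<subseteq> {..<sum_list d} \<and> length xs = length d}" using l by auto
  qed
  thus ?thesis by (rule finite_subset) (simp add: finite_lists_length_eq)
qed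

lemma state_support: "is_state D \<phi> \<Longrightarrow> \<phi> i \<noteq> 0 \<Longrightarrow> i \<in> basis D"
  by (auto simp: is_state_def)

lemma state_dims_pos: assumes "is_state D \<phi>" "j < length D" shows "0 < D!j"
proof (rule ccontr)
  assume "\<not> 0 < D!j"
  hence "basis D = {}" using assms(2) by (auto simp: basis_def)
  thus False using assms(1) by (simp add: is_state_def)
qed

lemma sum_indicator_inj:
  fixes e :: nat
  assumes "inj_on \<sigma> {..<e}"
  shows "(\<Sum>c<e. if \<sigma> c = a then (1::complex) else 0) = (if a \<in> \<sigma> ` {..<e} then 1 else 0)"
proof (cases "a \<in> \<sigma> ` {..<e}")
  case True
  then obtain c0 where c0: "c0 < e" "a = \<sigma> c0" by auto
  have "(\<Sum>c<e. if \<sigma> c = a then (1::complex) else 0) = (\<Sum>c<e. if c = c0 then 1 else 0)"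
    by (rule sum.cong) (use assms c0 in \<open>auto dest: inj_onD\<close>)
  also have "\<dots> = 1" using c0 by (subst sum.delta) auto
  finally show ?thesis using True by simp
next
  case False
  thus ?thesis by (auto intro!: sum.neutral)
qed



lemma double_delta:
  fixes F :: "nat \<Rightarrow> nat \<Rightarrow> complex"
  assumes "c < n" "c' < n"
  shows "(\<Sum>a<n. \<Sum>b<n. (if a = c then 1 else 0) * F a b * cnj (if b = c' then 1 else 0)) = F c c'"
proof -
  have "(\<Sum>a<n. \<Sum>b<n. (if a = c then 1 else 0) * F a b * cnj (if b = c' then 1 else 0))
      = (\<Sum>a<n. \<Sum>b<n. if a = c then (if b = c' then F a b else 0) else 0)"
    by (intro sum.cong refl) auto
  also have "\<dots> = (\<Sum>a<n. if a = c then (\<Sum>b<n. if b = c' then F a b else 0) else 0)"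
    by (intro sum.cong refl) auto
  also have "\<dots> = F c c'" using assms by (simp add: sum.delta)
  finally show ?thesis .
qed

lemma basis_upd_iff: "j < length D \<Longrightarrow> i \<in> basis (D[j:=e]) \<longleftrightarrow>
   length i = length D \<and> i!j < e \<and> (\<forall>l<length D. l \<noteq> j \<longrightarrow> i!l < D!l)"
  by (auto simp: basis_def nth_list_update split: if_splits)



locale ent =
  fixes E :: "nat list \<Rightarrow> mop \<Rightarrow> real" and k :: nat
  assumes k_pos: "0 < k"
    and additive: "\<And>d1 d2 \<phi>1 \<phi>2. length d1 = k \<Longrightarrow> length d2 = k \<Longrightarrow>
        is_state d1 \<phi>1 \<Longrightarrow> is_state d2 \<phi>2 \<Longrightarrow>
        E (tensor_dims d1 d2) (proj (tensor d1 d2 \<phi>1 \<phi>2)) = E d1 (proj \<phi>1) + E d2 (proj \<phi>2)"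
    and monotone: "\<And>d1 d2 T L X f P \<phi>0 \<chi>. length d1 = k \<Longrightarrow> locc d1 d2 T L \<Longrightarrow>
        is_state d1 \<phi>0 \<Longrightarrow> finite (X :: nat set) \<Longrightarrow> f ` T \<subseteq> X \<Longrightarrow>
        (\<And>x. x \<in> X \<Longrightarrow> is_state d2 (\<chi> x)) \<Longrightarrow>
        (\<And>x i i'. x \<in> X \<Longrightarrow>
            (\<Sum>t\<in>{t\<in>T. f t = x}. L t (proj \<phi>0) i i') = complex_of_real (P x) * proj (\<chi> x) i i') \<Longrightarrow>
        E d1 (proj \<phi>0) \<ge> (\<Sum>x\<in>X. P x * E d2 (proj (\<chi> x)))"
    and ghz_one: "E (replicate k 2) (proj (ghz k)) = 1"

lemma relabel_state:
  fixes e :: nat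
  assumes st: "is_state D \<phi>" and j: "j < length D" and sig: "\<forall>c<e. \<sigma> c < D!j"
    and inj: "inj_on \<sigma> {..<e}" and supp: "\<forall>i. \<phi> i \<noteq> 0 \<longrightarrow> i!j \<in> \<sigma> ` {..<e}"
  shows "is_state (D[j:=e]) (\<lambda>i. if i \<in> basis (D[j:=e]) then \<phi> (i[j:=\<sigma>(i!j)]) else 0)"
proof -
  define g where "g = (\<lambda>i::nat list. i[j:=\<sigma>(i!j)])"
  let ?B = "basis (D[j:=e])"
  have ginj: "inj_on g ?B"
  proof (rule inj_onI)
    fix x y assume x: "x \<in> ?B" and y: "y \<in> ?B" and eq: "g x = g y"
    have lx: "length x = length D" "x!j < e" and ly: "length y = length D" "y!j < e"
      using x y j by (auto simp: basis_upd_iff)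
    have "g x ! j = g y ! j" using eq by simp
    hence "\<sigma> (x!j) = \<sigma> (y!j)" using lx ly j by (simp add: g_def)
    hence xj: "x!j = y!j" using inj lx ly by (auto dest: inj_onD)
    show "x = y"
    proof (rule nth_equalityI)
      show "length x = length y" using lx ly by simp
      fix l assume "l < length x"
      show "x!l = y!l"
      proof (cases "l = j")
        case True thus ?thesis using xj by simp
      next
        case False
        have "g x ! l = g y ! l" using eq by simp
        thus ?thesis using False by (simp add: g_def)
      qed
    qed
  qed
  have gimg: "g ` ?B \<subseteq> basis D"
  proof
    fix y assume "y \<in> g ` ?B"
    then obtain x where x: "x \<in> ?B" "y = g x" by auto
    have lx: "length x = length D" "x!j < e" "\<forall>l<length D. l \<noteq> j \<longrightarrow> x!l < D!l"
      using x j by (auto simp: basis_upd_iff)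
    show "y \<in> basis D" using x lx sig j by (auto simp: basis_def g_def nth_list_update)
  qed
  have "(\<Sum>i\<in>?B. (cmod (if i \<in> ?B then \<phi> (i[j:=\<sigma>(i!j)]) else 0))\<^sup>2)
        = (\<Sum>i\<in>?B. (cmod (\<phi> (g i)))\<^sup>2)" by (simp add: g_def)
  also have "\<dots> = (\<Sum>i\<in>g ` ?B. (cmod (\<phi> i))\<^sup>2)"
    using ginj by (simp add: sum.reindex)
  also have "\<dots> = (\<Sum>i\<in>basis D. (cmod (\<phi> i))\<^sup>2)"
  proof (rule sum.mono_neutral_left[OF finite_basis gimg])
    show "\<forall>i\<in>basis D - g ` ?B. (cmod (\<phi> i))\<^sup>2 = 0"
    proof (intro ballI)
      fix i assume i: "i \<in> basis D - g ` ?B"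
      show "(cmod (\<phi> i))\<^sup>2 = 0"
      proof (rule ccontr)
        assume "(cmod (\<phi> i))\<^sup>2 \<noteq> 0"
        hence "\<phi> i \<noteq> 0" by auto
        then obtain c where c: "c < e" "i!j = \<sigma> c" using supp by auto
        have li: "length i = length D" "\<forall>l<length D. i!l < D!l" using i by (auto simp: basis_def)
        have "i[j:=c] \<in> ?B" using li c j by (auto simp: basis_upd_iff nth_list_update)
        moreover have "g (i[j:=c]) = i" using c j li by (simp add: g_def flip: c(2))
        ultimately show False using i by force
      qed
    qed
  qed
  also have "\<dots> = 1" using st by (simp add: is_state_def)
  finally show ?thesis by (simp add: is_state_def)
qed



context ent begin

lemma relabel1:
  fixes e :: nat
  assumes len: "length D = k" and st: "is_state D \<phi>" and j: "j < k" and sig: "\<forall>c<e. \<sigma> c < D!j"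
    and inj: "inj_on \<sigma> {..<e}" and supp: "\<forall>i. \<phi> i \<noteq> 0 \<longrightarrow> i!j \<in> \<sigma> ` {..<e}"
  shows "E (D[j:=e]) (proj (\<lambda>i. if i \<in> basis (D[j:=e]) then \<phi> (i[j:=\<sigma>(i!j)]) else 0)) \<le> E D (proj \<phi>)"
proof -
  define \<phi>' where "\<phi>' = (\<lambda>i. if i \<in> basis (D[j:=e]) then \<phi> (i[j:=\<sigma>(i!j)]) else 0)"
  have jD: "j < length D" using j len by simp
  have st': "is_state (D[j:=e]) \<phi>'" unfolding \<phi>'_def by (rule relabel_state[OF st jD sig inj supp])
  let ?S = "\<sigma> ` {..<e}"
  have epos: "0 < e"
  proof -
    have "basis D \<noteq> {}" using st by (auto simp: is_state_def)
    hence "\<exists>i. \<phi> i \<noteq> 0" using st by (force simp: is_state_def)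
    then show ?thesis using supp by auto
  qed
  define N where "N = (\<lambda>m::nat. if m = 0 then 1 else D!j)"
  define A where "A = (\<lambda>m::nat. \<lambda>r::nat. \<lambda>c a. if m = 0 then (if a = \<sigma> c then (1::complex) else 0)
        else (if c = 0 \<and> a = r \<and> r \<notin> ?S then 1 else 0))"
  have li: "local_instrument (D!j) e {0,1} N A"
    unfolding local_instrument_def
  proof (intro conjI allI impI)
    fix a b assume a: "a < D!j" and b: "b < D!j"
    have s0: "(\<Sum>r<N 0. \<Sum>c<e. cnj (A 0 r c a) * A 0 r c b) = (if a = b \<and> a \<in> ?S then 1 else 0)"
    proof (cases "a = b")
      case True
      have "(\<Sum>r<N 0. \<Sum>c<e. cnj (A 0 r c a) * A 0 r c b) = (\<Sum>c<e. if \<sigma> c = a then 1 else 0)"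
        using True by (auto simp: N_def A_def intro!: sum.cong)
      also have "\<dots> = (if a \<in> ?S then 1 else 0)" by (rule sum_indicator_inj[OF inj])
      finally show ?thesis using True by simp
    next
      case False
      thus ?thesis by (auto simp: N_def A_def intro!: sum.neutral)
    qed
    have s1: "(\<Sum>r<N 1. \<Sum>c<e. cnj (A 1 r c a) * A 1 r c b) = (if a = b \<and> a \<notin> ?S then 1 else 0)"
    proof (cases "a = b \<and> a \<notin> ?S")
      case True
      have N1: "N 1 = D!j" by (simp add: N_def)
      have "(\<Sum>r<D!j. \<Sum>c<e. cnj (A 1 r c a) * A 1 r c b) = (\<Sum>r<D!j. if r = a then (\<Sum>c<e. if c = 0 then 1 else 0) else 0)"
      proof (intro sum.cong refl)
        fix r assume "r \<in> {..<D!j}"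
        show "(\<Sum>c<e. cnj (A 1 r c a) * A 1 r c b) = (if r = a then (\<Sum>c<e. if c = 0 then 1 else 0) else 0)"
        proof (cases "r = a")
          case True2: True
          have "(\<Sum>c<e. cnj (A 1 r c a) * A 1 r c b) = (\<Sum>c<e. if c = 0 then 1 else 0)"
            using True True2 by (intro sum.cong refl) (auto simp: A_def)
          thus ?thesis using True2 by simp
        next
          case False
          thus ?thesis using True by (auto simp: A_def intro!: sum.neutral)
        qed
      qed
      also have "\<dots> = 1" using a epos by (simp add: sum.delta)
      finally show ?thesis using True N1 by auto
    next
      case False
      thus ?thesis by (auto simp: N_def A_def intro!: sum.neutral)
    qed
    show "(\<Sum>m\<in>{0,1}. \<Sum>r<N m. \<Sum>c<e. cnj (A m r c a) * A m r c b) = (if a = b then 1 else 0)"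
      using s0 s1 by simp
  qed simp
  define T where "T = (\<Union>m\<in>{0::nat,1}. (\<lambda>y. m # y) ` {[]::nat list})"
  have T: "T = {[0],[1]}" by (auto simp: T_def)
  define L where "L = (\<lambda>t \<rho>. (\<lambda>m (_::nat list) (\<rho>::mop). \<rho>) (hd t) (tl t) (local_op (D[j := e]) j (D ! j) (N (hd t)) (A (hd t)) \<rho>))"
  have lc: "locc D (D[j:=e]) T L"
    unfolding T_def L_def
    by (rule locc_step[OF jD li]) (rule locc_id)
  have L0: "L [0] (proj \<phi>) i i' = proj \<phi>' i i'" for i i'
  proof (cases "i \<in> basis (D[j:=e]) \<and> i' \<in> basis (D[j:=e])")
    case True
    hence ij: "i!j < e" "i'!j < e" using jD by (auto simp: basis_upd_iff)
    have "L [0] (proj \<phi>) i i' = (\<Sum>a<D!j. \<Sum>b<D!j. (if a = \<sigma> (i!j) then 1 else 0) * (\<phi> (i[j:=a]) * cnj (\<phi> (i'[j:=b]))) * cnj (if b = \<sigma> (i'!j) then 1 else 0))"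
      using True by (simp add: L_def local_op_def N_def A_def proj_def)
    also have "\<dots> = \<phi> (i[j:=\<sigma>(i!j)]) * cnj (\<phi> (i'[j:=\<sigma>(i'!j)]))"
      by (rule double_delta) (use ij sig in auto)
    finally show ?thesis using True by (simp add: proj_def \<phi>'_def)
  next
    case False
    thus ?thesis by (auto simp: L_def local_op_def proj_def \<phi>'_def)
  qed
  have L1: "L [1] (proj \<phi>) i i' = 0" for i i'
  proof -
    have z: "A (Suc 0) r (i!j) a * (\<phi> (i[j:=a]) * cnj (\<phi> (i'[j:=b]))) * cnj (A (Suc 0) r (i'!j) b) = 0" for r a b
    proof (cases "i!j = 0 \<and> a = r \<and> r \<notin> ?S")
      case True
      show ?thesis
      proof (cases "j < length i")
        case True2: True
        have "\<phi> (i[j:=a]) = 0" using supp True True2 by fastforce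
        thus ?thesis by simp
      next
        case False
        hence "\<phi> (i[j:=a]) = 0" using st jD by (auto simp: is_state_def basis_def)
        thus ?thesis by simp
      qed
    next
      case False
      hence "A 1 r (i!j) a = 0" by (simp add: A_def)
      thus ?thesis by simp
    qed
    show ?thesis by (simp add: L_def local_op_def proj_def z del: mult_eq_0_iff)
  qed
  have "(\<Sum>x\<in>{0::nat}. 1 * E (D[j:=e]) (proj ((\<lambda>_. \<phi>') x))) \<le> E D (proj \<phi>)"
  proof (rule monotone[OF len lc st, where f="\<lambda>_. 0"])
    fix x i i' assume "x \<in> {0::nat}"
    have "{t \<in> T. (\<lambda>_. 0::nat) t = x} = {[0],[1]}" using T \<open>x \<in> {0}\<close> by auto
    thus "(\<Sum>t\<in>{t \<in> T. (\<lambda>_. 0::nat) t = x}. L t (proj \<phi>) i i') = complex_of_real 1 * proj ((\<lambda>_. \<phi>') x) i i'"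
      using L0 L1 by simp
  qed (use st' in auto)
  thus ?thesis by (simp add: \<phi>'_def)
qed

end


context ent begin

lemma relabel_all:
  assumes len: "length D = k" and lene: "length e = k" and st: "is_state D \<phi>"
    and sig: "\<forall>j<k. \<forall>c<e!j. \<sigma> j c < D!j" and inj: "\<forall>j<k. inj_on (\<sigma> j) {..<e!j}"
    and supp: "\<forall>i. \<phi> i \<noteq> 0 \<longrightarrow> (\<forall>j<k. i!j \<in> \<sigma> j ` {..<e!j})"
  shows "is_state e (\<lambda>i. if i \<in> basis e then \<phi> (map (\<lambda>j. \<sigma> j (i!j)) [0..<k]) else 0) \<and>
     E e (proj (\<lambda>i. if i \<in> basis e then \<phi> (map (\<lambda>j. \<sigma> j (i!j)) [0..<k]) else 0)) \<le> E D (proj \<phi>)"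
proof -
  define Dl where "Dl = (\<lambda>l. map (\<lambda>j. if j < l then e!j else D!j) [0..<k])"
  define \<phi>l where "\<phi>l = (\<lambda>l i. if i \<in> basis (Dl l) then \<phi> (map (\<lambda>j. if j<l then \<sigma> j (i!j) else i!j) [0..<k]) else 0)"
  have lenDl: "length (Dl l) = k" for l by (simp add: Dl_def)
  have claim: "l \<le> k \<Longrightarrow> is_state (Dl l) (\<phi>l l) \<and> E (Dl l) (proj (\<phi>l l)) \<le> E D (proj \<phi>) \<and>
      (\<forall>i. \<phi>l l i \<noteq> 0 \<longrightarrow> (\<forall>j. l \<le> j \<and> j < k \<longrightarrow> i!j \<in> \<sigma> j ` {..<e!j}))" for l
  proof (induction l)
    case 0
    have D0: "Dl 0 = D" by (rule nth_equalityI) (auto simp: Dl_def len)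
    have p0: "\<phi>l 0 = \<phi>"
    proof
      fix i show "\<phi>l 0 i = \<phi> i"
      proof (cases "i \<in> basis D")
        case True
        hence "map (\<lambda>j. i!j) [0..<k] = i" using len by (intro nth_equalityI) (auto simp: basis_def)
        thus ?thesis using True D0 by (simp add: \<phi>l_def)
      next
        case False thus ?thesis using D0 st by (auto simp: \<phi>l_def is_state_def)
      qed
    qed
    show ?case using D0 p0 st supp by simp
  next
    case (Suc l)
    hence lk: "l < k" by simp
    from Suc have IH: "is_state (Dl l) (\<phi>l l)" "E (Dl l) (proj (\<phi>l l)) \<le> E D (proj \<phi>)"
      "\<forall>i. \<phi>l l i \<noteq> 0 \<longrightarrow> (\<forall>j. l \<le> j \<and> j < k \<longrightarrow> i!j \<in> \<sigma> j ` {..<e!j})" by auto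
    have Dupd: "(Dl l)[l := e!l] = Dl (Suc l)"
      using lk by (intro nth_equalityI) (auto simp: Dl_def nth_list_update less_Suc_eq)
    have Dll: "Dl l ! l = D!l" using lk by (simp add: Dl_def)
    have supl: "\<forall>i. \<phi>l l i \<noteq> 0 \<longrightarrow> i!l \<in> \<sigma> l ` {..<e!l}" using IH(3) lk by auto
    have sigl: "\<forall>c<e!l. \<sigma> l c < Dl l ! l" using sig lk Dll by auto
    have eqv: "(\<lambda>i. if i \<in> basis ((Dl l)[l:=e!l]) then \<phi>l l (i[l:=\<sigma> l (i!l)]) else 0) = \<phi>l (Suc l)"
    proof
      fix i show "(if i \<in> basis ((Dl l)[l:=e!l]) then \<phi>l l (i[l:=\<sigma> l (i!l)]) else 0) = \<phi>l (Suc l) i"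
      proof (cases "i \<in> basis (Dl (Suc l))")
        case True
        hence li: "length i = k" "\<forall>j<k. i!j < Dl (Suc l) ! j" by (auto simp: basis_def lenDl)
        have il: "i!l < e!l" using li lk by (auto simp: Dl_def)
        have inb: "i[l:=\<sigma> l (i!l)] \<in> basis (Dl l)"
          unfolding basis_def
        proof (intro CollectI conjI allI impI)
          show "length (i[l := \<sigma> l (i ! l)]) = length (Dl l)" using li lenDl by simp
          fix j assume j: "j < length (Dl l)"
          hence jk: "j < k" using lenDl by simp
          have "i!j < Dl (Suc l) ! j" using li jk by simp
          thus "i[l := \<sigma> l (i ! l)] ! j < Dl l ! j"
            using jk lk sig il li by (auto simp: Dl_def nth_list_update)
        qed
        have mp: "map (\<lambda>j. if j<l then \<sigma> j (i[l:=\<sigma> l (i!l)] ! j) else i[l:=\<sigma> l (i!l)] ! j) [0..<k]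
            = map (\<lambda>j. if j<Suc l then \<sigma> j (i!j) else i!j) [0..<k]"
          using li lk by (intro nth_equalityI) (auto simp: nth_list_update less_Suc_eq)
        show ?thesis unfolding \<phi>l_def using True Dupd inb by (simp only: mp if_True)
      next
        case False thus ?thesis using Dupd by (simp add: \<phi>l_def)
      qed
    qed
    have r1: "is_state ((Dl l)[l:=e!l]) (\<lambda>i. if i \<in> basis ((Dl l)[l:=e!l]) then \<phi>l l (i[l:=\<sigma> l (i!l)]) else 0)"
      by (rule relabel_state[OF IH(1) _ sigl]) (use lk lenDl inj supl in auto)
    have r2: "E ((Dl l)[l:=e!l]) (proj (\<lambda>i. if i \<in> basis ((Dl l)[l:=e!l]) then \<phi>l l (i[l:=\<sigma> l (i!l)]) else 0)) \<le> E (Dl l) (proj (\<phi>l l))"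
      by (rule relabel1[OF lenDl IH(1) lk sigl]) (use lk inj supl in auto)
    have sup': "\<forall>i. \<phi>l (Suc l) i \<noteq> 0 \<longrightarrow> (\<forall>j. Suc l \<le> j \<and> j < k \<longrightarrow> i!j \<in> \<sigma> j ` {..<e!j})"
    proof (intro allI impI)
      fix i j assume nz: "\<phi>l (Suc l) i \<noteq> 0" and j: "Suc l \<le> j \<and> j < k"
      hence "\<phi> (map (\<lambda>j. if j<Suc l then \<sigma> j (i!j) else i!j) [0..<k]) \<noteq> 0"
        by (auto simp: \<phi>l_def split: if_splits)
      hence "map (\<lambda>j. if j<Suc l then \<sigma> j (i!j) else i!j) [0..<k] ! j \<in> \<sigma> j ` {..<e!j}"
        using supp j by blast
      thus "i!j \<in> \<sigma> j ` {..<e!j}" using j by simp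
    qed
    show ?case using r1 r2 IH(2) eqv Dupd sup' by simp
  qed
  have Dk: "Dl k = e" by (rule nth_equalityI) (auto simp: Dl_def lene)
  have pk: "\<phi>l k = (\<lambda>i. if i \<in> basis e then \<phi> (map (\<lambda>j. \<sigma> j (i!j)) [0..<k]) else 0)"
  proof -
    have m: "map (\<lambda>j. if j<k then \<sigma> j (i!j) else i!j) [0..<k] = map (\<lambda>j. \<sigma> j (i!j)) [0..<k]" for i
      by (rule map_cong) auto
    show ?thesis unfolding \<phi>l_def Dk by (simp only: m)
  qed
  show ?thesis using claim[of k] Dk pk by simp
qed

end


lemma double_delta2:
  fixes W :: "nat \<Rightarrow> nat \<Rightarrow> complex"
  assumes "c < n" "c' < n" "\<And>a b. \<not> (a = c \<and> b = c') \<Longrightarrow> W a b = 0"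
  shows "(\<Sum>a<n. \<Sum>b<n. W a b) = W c c'"
proof -
  have "(\<Sum>a<n. \<Sum>b<n. W a b) = (\<Sum>a<n. \<Sum>b<n. if a = c then (if b = c' then W a b else 0) else 0)"
    using assms(3) by (intro sum.cong refl) auto
  also have "\<dots> = (\<Sum>a<n. if a = c then (\<Sum>b<n. if b = c' then W a b else 0) else 0)"
    by (intro sum.cong refl) auto
  also have "\<dots> = W c c'" using assms by (simp add: sum.delta)
  finally show ?thesis .
qed

context ent begin

lemma measure2:
  assumes len: "length D = k" and st: "is_state D \<phi>" and j: "j < k"
    and s1: "is_state D \<chi>1" and s2: "is_state D \<chi>2"
    and e1: "\<And>i. (if i!j \<in> S then \<phi> i else 0) = \<alpha>1 * \<chi>1 i"
    and e2: "\<And>i. (if i!j \<notin> S then \<phi> i else 0) = \<alpha>2 * \<chi>2 i"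
  shows "(cmod \<alpha>1)\<^sup>2 * E D (proj \<chi>1) + (cmod \<alpha>2)\<^sup>2 * E D (proj \<chi>2) \<le> E D (proj \<phi>)"
proof -
  have jD: "j < length D" using j len by simp
  define N where "N = (\<lambda>m::nat. 1::nat)"
  define A where "A = (\<lambda>m::nat. \<lambda>r::nat. \<lambda>c a. if c = a \<and> (if m = 0 then a \<in> S else a \<notin> S) then (1::complex) else 0)"
  have li: "local_instrument (D!j) (D!j) {0,1} N A"
    unfolding local_instrument_def
  proof (intro conjI allI impI)
    fix a b assume a: "a < D!j" and b: "b < D!j"
    have s0: "(\<Sum>c<D!j. cnj (A m 0 c a) * A m 0 c b) = (if a = b then A m 0 a a else 0)" for m
    proof (cases "a = b")
      case True
      have "(\<Sum>c<D!j. cnj (A m 0 c a) * A m 0 c b) = (\<Sum>c<D!j. if c = a then A m 0 a a else 0)"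
        using True by (intro sum.cong refl) (auto simp: A_def)
      also have "\<dots> = A m 0 a a" using a by (simp add: sum.delta)
      finally show ?thesis using True by simp
    next
      case False thus ?thesis by (auto simp: A_def intro!: sum.neutral)
    qed
    show "(\<Sum>m\<in>{0,1}. \<Sum>r<N m. \<Sum>c<D!j. cnj (A m r c a) * A m r c b) = (if a = b then 1 else 0)"
      using s0 by (simp add: N_def A_def)
  qed simp
  define T where "T = (\<Union>m\<in>{0::nat,1}. (\<lambda>y. m # y) ` {[]::nat list})"
  have T: "T = {[0],[1]}" by (auto simp: T_def)
  define L where "L = (\<lambda>t \<rho>. (\<lambda>m (_::nat list) (\<rho>::mop). \<rho>) (hd t) (tl t) (local_op (D[j := D!j]) j (D ! j) (N (hd t)) (A (hd t)) \<rho>))"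
  have lc: "locc D (D[j:=D!j]) T L"
    unfolding T_def L_def
    by (rule locc_step[OF jD li]) (rule locc_id)
  have Du: "D[j:=D!j] = D" by simp
  have Lm: "L [m] (proj \<phi>) i i' = (if i \<in> basis D \<and> i' \<in> basis D then
      (if (if m = 0 then i!j \<in> S else i!j \<notin> S) then \<phi> i else 0) *
      cnj (if (if m = 0 then i'!j \<in> S else i'!j \<notin> S) then \<phi> i' else 0) else 0)" for m i i'
  proof (cases "i \<in> basis D \<and> i' \<in> basis D")
    case True
    hence ij: "i!j < D!j" "i'!j < D!j" "length i = length D" "length i' = length D" using jD by (auto simp: basis_def)
    have "L [m] (proj \<phi>) i i' = (\<Sum>a<D!j. \<Sum>b<D!j. A m 0 (i!j) a * (\<phi> (i[j:=a]) * cnj (\<phi> (i'[j:=b]))) * cnj (A m 0 (i'!j) b))"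
      using True by (simp add: L_def local_op_def N_def proj_def)
    also have "\<dots> = A m 0 (i!j) (i!j) * (\<phi> (i[j:=i!j]) * cnj (\<phi> (i'[j:=i'!j]))) * cnj (A m 0 (i'!j) (i'!j))"
      by (rule double_delta2) (use ij in \<open>auto simp: A_def\<close>)
    finally show ?thesis using True by (simp add: A_def)
  next
    case False thus ?thesis by (auto simp: L_def local_op_def)
  qed
  have "(\<Sum>x\<in>{0::nat,1}. (if x = 0 then (cmod \<alpha>1)\<^sup>2 else (cmod \<alpha>2)\<^sup>2) *
          E (D[j:=D!j]) (proj ((\<lambda>x. if x = 0 then \<chi>1 else \<chi>2) x))) \<le> E D (proj \<phi>)"
  proof (rule monotone[OF len lc st, where f="hd"])
    show "hd ` T \<subseteq> {0,1}" using T by auto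
    fix x i i' assume x: "x \<in> {0::nat,1}"
    have Tx: "{t \<in> T. hd t = x} = {[x]}" using T x by auto
    show "(\<Sum>t\<in>{t \<in> T. hd t = x}. L t (proj \<phi>) i i') =
        complex_of_real (if x = 0 then (cmod \<alpha>1)\<^sup>2 else (cmod \<alpha>2)\<^sup>2) * proj ((\<lambda>x. if x = 0 then \<chi>1 else \<chi>2) x) i i'"
    proof (cases "i \<in> basis D \<and> i' \<in> basis D")
      case True
      show ?thesis
      proof (cases "x = 0")
        case True2: True
        have "L [x] (proj \<phi>) i i' = (\<alpha>1 * \<chi>1 i) * cnj (\<alpha>1 * \<chi>1 i')"
          using Lm[of x i i'] True True2 e1[of i] e1[of i'] by simp
        also have "\<dots> = (\<alpha>1 * cnj \<alpha>1) * (\<chi>1 i * cnj (\<chi>1 i'))" by (simp add: mult_ac)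
        also have "\<dots> = complex_of_real ((cmod \<alpha>1)\<^sup>2) * proj \<chi>1 i i'"
          by (simp only: proj_def complex_norm_square)
        finally show ?thesis using Tx True2 by simp
      next
        case False2: False
        have "L [x] (proj \<phi>) i i' = (\<alpha>2 * \<chi>2 i) * cnj (\<alpha>2 * \<chi>2 i')"
          using Lm[of x i i'] True False2 e2[of i] e2[of i'] by simp
        also have "\<dots> = (\<alpha>2 * cnj \<alpha>2) * (\<chi>2 i * cnj (\<chi>2 i'))" by (simp add: mult_ac)
        also have "\<dots> = complex_of_real ((cmod \<alpha>2)\<^sup>2) * proj \<chi>2 i i'"
          by (simp only: proj_def complex_norm_square)
        finally show ?thesis using Tx False2 by simp
      qed
    next
      case False
      hence "proj \<chi>1 i i' = 0" "proj \<chi>2 i i' = 0" using s1 s2 by (auto simp: proj_def is_state_def)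
      thus ?thesis using Tx Lm[of x i i'] False by simp
    qed
  qed (use s1 s2 in auto)
  thus ?thesis by simp
qed

end


lemma nth_map2 [simp]: "j < length xs \<Longrightarrow> j < length ys \<Longrightarrow> map2 f xs ys ! j = f (xs!j) (ys!j)"
  by simp

lemma tensor_state:
  assumes l: "length d1 = length d2" and s1: "is_state d1 \<phi>1" and s2: "is_state d2 \<phi>2"
  shows "is_state (tensor_dims d1 d2) (tensor d1 d2 \<phi>1 \<phi>2)"
proof -
  let ?T = "basis (tensor_dims d1 d2)"
  define h where "h = (\<lambda>i. (map2 (div) i d2, map2 (mod) i d2))"
  have pos: "\<And>j. j < length d2 \<Longrightarrow> 0 < d2!j" using s2 state_dims_pos by blast
  have bij: "bij_betw h ?T (basis d1 \<times> basis d2)"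
  proof (rule bij_betw_imageI)
    show "inj_on h ?T"
    proof (rule inj_onI)
      fix x y assume x: "x \<in> ?T" and y: "y \<in> ?T" and eq: "h x = h y"
      have lx: "length x = length d2" "length y = length d2" using x y l by (auto simp: basis_def tensor_dims_def)
      show "x = y"
      proof (rule nth_equalityI)
        show "length x = length y" using lx by simp
        fix j assume j: "j < length x"
        have "map2 (div) x d2 ! j = map2 (div) y d2 ! j" "map2 (mod) x d2 ! j = map2 (mod) y d2 ! j"
          using eq by (auto simp: h_def)
        hence "x!j div d2!j = y!j div d2!j" "x!j mod d2!j = y!j mod d2!j" using j lx by auto
        thus "x!j = y!j" by (metis div_mult_mod_eq)
      qed
    qed
    show "h ` ?T = basis d1 \<times> basis d2"
    proof
      show "h ` ?T \<subseteq> basis d1 \<times> basis d2"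
      proof
        fix z assume "z \<in> h ` ?T"
        then obtain x where x: "x \<in> ?T" "z = h x" by auto
        have lx: "length x = length d2" "\<forall>j<length d2. x!j < d1!j * d2!j" using x l by (auto simp: basis_def tensor_dims_def)
        have "\<forall>j<length d2. x!j div d2!j < d1!j"
          using lx pos by (auto simp: div_less_iff_less_mult mult.commute)
        moreover have "\<forall>j<length d2. x!j mod d2!j < d2!j" using pos by auto
        ultimately show "z \<in> basis d1 \<times> basis d2" using x lx l by (auto simp: h_def basis_def)
      qed
      show "basis d1 \<times> basis d2 \<subseteq> h ` ?T"
      proof
        fix z assume z: "z \<in> basis d1 \<times> basis d2"
        obtain a b where ab: "z = (a,b)" by (cases z)
        have la: "length a = length d2" "\<forall>j<length d2. a!j < d1!j" and lb: "length b = length d2" "\<forall>j<length d2. b!j < d2!j"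
          using z ab l by (auto simp: basis_def)
        define x where "x = map (\<lambda>j. a!j * d2!j + b!j) [0..<length d2]"
        have "x \<in> ?T"
        proof -
          have "a!j * d2!j + b!j < d1!j * d2!j" if "j < length d2" for j
          proof -
            have "a!j * d2!j + b!j < a!j * d2!j + d2!j" using lb that by simp
            also have "\<dots> = (a!j + 1) * d2!j" by simp
            also have "\<dots> \<le> d1!j * d2!j" using la that by (intro mult_right_mono) auto
            finally show ?thesis .
          qed
          thus ?thesis using l by (auto simp: basis_def x_def tensor_dims_def)
        qed
        moreover have "h x = z"
        proof -
          have "map2 (div) x d2 = a" using la lb pos by (intro nth_equalityI) (auto simp: x_def)
          moreover have "map2 (mod) x d2 = b" using la lb pos by (intro nth_equalityI) (auto simp: x_def)
          ultimately show ?thesis by (simp add: h_def ab)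
        qed
        ultimately show "z \<in> h ` ?T" by force
      qed
    qed
  qed
  have "(\<Sum>i\<in>?T. (cmod (tensor d1 d2 \<phi>1 \<phi>2 i))\<^sup>2) = (\<Sum>i\<in>?T. (\<lambda>(a,b). (cmod (\<phi>1 a))\<^sup>2 * (cmod (\<phi>2 b))\<^sup>2) (h i))"
    by (intro sum.cong refl) (simp add: tensor_def h_def norm_mult power_mult_distrib)
  also have "\<dots> = (\<Sum>z\<in>basis d1 \<times> basis d2. (\<lambda>(a,b). (cmod (\<phi>1 a))\<^sup>2 * (cmod (\<phi>2 b))\<^sup>2) z)"
    using sum.reindex_bij_betw[OF bij] by blast
  also have "\<dots> = (\<Sum>a\<in>basis d1. (cmod (\<phi>1 a))\<^sup>2) * (\<Sum>b\<in>basis d2. (cmod (\<phi>2 b))\<^sup>2)"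
    by (simp add: sum_product sum.cartesian_product)
  also have "\<dots> = 1" using s1 s2 by (simp add: is_state_def)
  finally show ?thesis by (simp add: is_state_def tensor_def)
qed



lemma dsum_state:
  assumes l: "length d = length d'" and l0: "0 < length d" and s1: "is_state d \<phi>" and s2: "is_state d' \<psi>"
    and ab: "(cmod a)\<^sup>2 + (cmod b)\<^sup>2 = 1"
  shows "is_state (dsum_dims d d') (dsum d d' a \<phi> b \<psi>)"
proof -
  let ?D = "dsum_dims d d'"
  let ?f = "\<lambda>i. (cmod (dsum d d' a \<phi> b \<psi> i))\<^sup>2"
  define sh where "sh = (\<lambda>i::nat list. map2 (+) i d)"
  have lD: "length ?D = length d" using l by (simp add: dsum_dims_def)
  have B1: "basis d \<subseteq> basis ?D" using l by (auto simp: basis_def dsum_dims_def)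
  have B2: "sh ` basis d' \<subseteq> basis ?D" using l by (auto simp: basis_def dsum_dims_def sh_def)
  have shinj: "inj_on sh (basis d')"
  proof (rule inj_onI)
    fix x y assume "x \<in> basis d'" "y \<in> basis d'" "sh x = sh y"
    hence lx: "length x = length d" "length y = length d" and "\<forall>j<length d. (sh x)!j = (sh y)!j"
      using l by (auto simp: basis_def)
    hence "\<forall>j<length d. x!j = y!j" by (auto simp: sh_def)
    thus "x = y" using lx by (intro nth_equalityI) auto
  qed
  have disj: "basis d \<inter> sh ` basis d' = {}"
  proof (rule ccontr)
    assume "basis d \<inter> sh ` basis d' \<noteq> {}"
    then obtain x y where "x \<in> basis d" "y \<in> basis d'" "x = sh y" by auto
    hence "x!0 < d!0" "x!0 = y!0 + d!0" using l l0 by (auto simp: basis_def sh_def)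
    thus False by simp
  qed
  have v1: "dsum d d' a \<phi> b \<psi> i = a * \<phi> i" if "i \<in> basis d" for i
    using that B1 by (auto simp: dsum_def basis_def)
  have v2: "dsum d d' a \<phi> b \<psi> (sh i) = b * \<psi> i" if "i \<in> basis d'" for i
  proof -
    have li: "length i = length d" using that l by (auto simp: basis_def)
    have "\<not> (\<forall>j<length d. sh i ! j < d!j)" using l0 li l by (auto simp: sh_def)
    moreover have "\<forall>j<length d. d!j \<le> sh i ! j" using li l by (auto simp: sh_def)
    moreover have "map2 (-) (sh i) d = i" using li l by (intro nth_equalityI) (auto simp: sh_def)
    ultimately show ?thesis using that B2 by (auto simp: dsum_def)
  qed
  have zero: "?f i = 0" if "i \<in> basis ?D - (basis d \<union> sh ` basis d')" for i
  proof -
    have li: "length i = length d" "\<forall>j<length d. i!j < d!j + d'!j" using that l lD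
      by (auto simp: basis_def dsum_dims_def)
    have n1: "\<not> (\<forall>j<length d. i!j < d!j)" using that li by (auto simp: basis_def)
    have n2: "\<not> (\<forall>j<length d. d!j \<le> i!j)"
    proof
      assume ge: "\<forall>j<length d. d!j \<le> i!j"
      define y where "y = map2 (-) i d"
      have "y \<in> basis d'" unfolding basis_def
      proof (intro CollectI conjI allI impI)
        show "length y = length d'" using li l by (simp add: y_def)
        fix j assume "j < length d'"
        hence a: "i!j < d!j + d'!j" "d!j \<le> i!j" "j < length d" using li ge l by auto
        have "y!j = i!j - d!j" using a li l by (simp add: y_def)
        thus "y!j < d'!j" using a by linarith
      qed
      moreover have "sh y = i" using li ge l by (intro nth_equalityI) (auto simp: y_def sh_def)
      ultimately show False using that by auto
    qed
    have "dsum d d' a \<phi> b \<psi> i = 0" unfolding dsum_def using n1 n2 by (simp only: if_False if_cancel)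
    thus ?thesis by simp
  qed
  have "(\<Sum>i\<in>basis ?D. ?f i) = (\<Sum>i\<in>basis d \<union> sh ` basis d'. ?f i)"
    by (rule sum.mono_neutral_right[OF finite_basis]) (use B1 B2 zero in auto)
  also have "\<dots> = (\<Sum>i\<in>basis d. ?f i) + (\<Sum>i\<in>sh ` basis d'. ?f i)"
    by (rule sum.union_disjoint) (use disj finite_basis in auto)
  also have "(\<Sum>i\<in>basis d. ?f i) = (cmod a)\<^sup>2 * (\<Sum>i\<in>basis d. (cmod (\<phi> i))\<^sup>2)"
    by (simp add: sum_distrib_left v1 norm_mult power_mult_distrib)
  also have "(\<Sum>i\<in>sh ` basis d'. ?f i) = (\<Sum>i\<in>basis d'. ?f (sh i))"
    using shinj by (simp add: sum.reindex)
  also have "\<dots> = (cmod b)\<^sup>2 * (\<Sum>i\<in>basis d'. (cmod (\<psi> i))\<^sup>2)"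
    by (simp add: sum_distrib_left v2 norm_mult power_mult_distrib)
  finally have "(\<Sum>i\<in>basis ?D. ?f i) = 1" using s1 s2 ab by (simp add: is_state_def)
  thus ?thesis by (simp add: is_state_def dsum_def)
qed

lemma ghz_state:
  assumes "0 < k" shows "is_state (replicate k 2) (ghz k)"
proof -
  have ne: "replicate k (0::nat) \<noteq> replicate k 1" using assms by (cases k) auto
  have inb: "replicate k 0 \<in> basis (replicate k 2)" "replicate k 1 \<in> basis (replicate k 2)"
    by (auto simp: basis_def)
  have "(\<Sum>i\<in>basis (replicate k 2). (cmod (ghz k i))\<^sup>2) = (\<Sum>i\<in>{replicate k 0, replicate k 1}. (cmod (ghz k i))\<^sup>2)"
    by (rule sum.mono_neutral_right[OF finite_basis]) (use inb in \<open>auto simp: ghz_def\<close>)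
  also have "\<dots> = 1" using ne by (simp add: ghz_def norm_divide power_divide)
  finally show ?thesis using inb by (auto simp: is_state_def ghz_def)
qed



context ent begin

lemma dsum_ge:
  assumes l: "length d = k" "length d' = k" and s1: "is_state d \<phi>" and s2: "is_state d' \<psi>"
    and p: "0 \<le> p" "p \<le> 1"
  shows "p * E d (proj \<phi>) + (1 - p) * E d' (proj \<psi>) \<le>
     E (dsum_dims d d') (proj (dsum d d' (complex_of_real (sqrt p)) \<phi> (complex_of_real (sqrt (1 - p))) \<psi>))"
proof -
  let ?D = "dsum_dims d d'"
  let ?\<Phi> = "dsum d d' (complex_of_real (sqrt p)) \<phi> (complex_of_real (sqrt (1 - p))) \<psi>"
  let ?\<chi>1 = "dsum d d' 1 \<phi> 0 \<psi>"
  let ?\<chi>2 = "dsum d d' 0 \<phi> 1 \<psi>"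
  have lD: "length ?D = k" using l by (simp add: dsum_dims_def)
  have k0: "0 < length d" using l k_pos by simp
  have st: "is_state ?D ?\<Phi>" by (rule dsum_state) (use l k0 s1 s2 p in auto)
  have st1: "is_state ?D ?\<chi>1" by (rule dsum_state) (use l k0 s1 s2 in auto)
  have st2: "is_state ?D ?\<chi>2" by (rule dsum_state) (use l k0 s1 s2 in auto)
  have e1: "(if i!0 \<in> {..<d!0} then ?\<Phi> i else 0) = complex_of_real (sqrt p) * ?\<chi>1 i" for i
    using k0 by (auto simp: dsum_def)
  have e2: "(if i!0 \<notin> {..<d!0} then ?\<Phi> i else 0) = complex_of_real (sqrt (1-p)) * ?\<chi>2 i" for i
    using k0 by (auto simp: dsum_def)
  have m: "(cmod (complex_of_real (sqrt p)))\<^sup>2 * E ?D (proj ?\<chi>1) + (cmod (complex_of_real (sqrt (1-p))))\<^sup>2 * E ?D (proj ?\<chi>2) \<le> E ?D (proj ?\<Phi>)"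
    by (rule measure2[OF lD st k_pos st1 st2 e1 e2])
  have r1: "E d (proj \<phi>) \<le> E ?D (proj ?\<chi>1)"
  proof -
    have "is_state d (\<lambda>i. if i \<in> basis d then ?\<chi>1 (map (\<lambda>j. (\<lambda>j c. c) j (i!j)) [0..<k]) else 0) \<and>
      E d (proj (\<lambda>i. if i \<in> basis d then ?\<chi>1 (map (\<lambda>j. (\<lambda>j c. c) j (i!j)) [0..<k]) else 0)) \<le> E ?D (proj ?\<chi>1)"
    proof (rule relabel_all[OF lD l(1) st1])
      show "\<forall>j<k. \<forall>c<d ! j. c < ?D ! j" using l by (auto simp: dsum_dims_def)
      show "\<forall>i. ?\<chi>1 i \<noteq> 0 \<longrightarrow> (\<forall>j<k. i ! j \<in> (\<lambda>c. c) ` {..<d ! j})"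
        using l by (auto simp: dsum_def split: if_splits)
    qed auto
    moreover have "(\<lambda>i. if i \<in> basis d then ?\<chi>1 (map (\<lambda>j. (\<lambda>j c. c) j (i!j)) [0..<k]) else 0) = \<phi>"
    proof
      fix i show "(if i \<in> basis d then ?\<chi>1 (map (\<lambda>j. (\<lambda>j c. c) j (i!j)) [0..<k]) else 0) = \<phi> i"
      proof (cases "i \<in> basis d")
        case True
        hence li: "length i = k" "\<forall>j<k. i!j < d!j" using l by (auto simp: basis_def)
        have mi: "map (\<lambda>j. (\<lambda>j c. c) j (i!j)) [0..<k] = i" using li by (intro nth_equalityI) auto
        have "i \<in> basis ?D" using li l by (auto simp: basis_def dsum_dims_def)
        thus ?thesis using True mi li l by (simp add: dsum_def)
      next
        case False thus ?thesis using s1 by (simp add: is_state_def)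
      qed
    qed
    ultimately show ?thesis by simp
  qed
  have r2: "E d' (proj \<psi>) \<le> E ?D (proj ?\<chi>2)"
  proof -
    have "is_state d' (\<lambda>i. if i \<in> basis d' then ?\<chi>2 (map (\<lambda>j. (\<lambda>j c. d!j + c) j (i!j)) [0..<k]) else 0) \<and>
      E d' (proj (\<lambda>i. if i \<in> basis d' then ?\<chi>2 (map (\<lambda>j. (\<lambda>j c. d!j + c) j (i!j)) [0..<k]) else 0)) \<le> E ?D (proj ?\<chi>2)"
    proof (rule relabel_all[OF lD l(2) st2])
      show "\<forall>j<k. \<forall>c<d' ! j. d!j + c < ?D ! j" using l by (auto simp: dsum_dims_def)
      show "\<forall>j<k. inj_on (\<lambda>c. d!j + c) {..<d' ! j}" by (auto intro: inj_onI)
      show "\<forall>i. ?\<chi>2 i \<noteq> 0 \<longrightarrow> (\<forall>j<k. i ! j \<in> (\<lambda>c. d!j + c) ` {..<d' ! j})"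
      proof (intro allI impI)
        fix i j assume nz: "?\<chi>2 i \<noteq> 0" and j: "j < k"
        hence inb: "i \<in> basis ?D" and ge: "\<forall>j<length d. d!j \<le> i!j"
          by (auto simp: dsum_def split: if_splits)
        have "i!j < d!j + d'!j" "d!j \<le> i!j" using inb ge j l by (auto simp: basis_def dsum_dims_def)
        hence "i!j = d!j + (i!j - d!j)" "i!j - d!j < d'!j" by auto
        thus "i ! j \<in> (\<lambda>c. d!j + c) ` {..<d' ! j}" by (metis image_eqI lessThan_iff)
      qed
    qed
    moreover have "(\<lambda>i. if i \<in> basis d' then ?\<chi>2 (map (\<lambda>j. (\<lambda>j c. d!j + c) j (i!j)) [0..<k]) else 0) = \<psi>"
    proof
      fix i show "(if i \<in> basis d' then ?\<chi>2 (map (\<lambda>j. (\<lambda>j c. d!j + c) j (i!j)) [0..<k]) else 0) = \<psi> i"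
      proof (cases "i \<in> basis d'")
        case True
        hence li: "length i = k" "\<forall>j<k. i!j < d'!j" using l by (auto simp: basis_def)
        define y where "y = map (\<lambda>j. (\<lambda>j c. d!j + c) j (i!j)) [0..<k]"
        have y1: "map2 (-) y d = i" using li l by (intro nth_equalityI) (auto simp: y_def)
        have "y \<in> basis ?D" using li l by (auto simp: basis_def dsum_dims_def y_def)
        moreover have "\<not> (\<forall>j<length d. y!j < d!j)" using k0 l by (auto simp: y_def)
        moreover have "\<forall>j<length d. d!j \<le> y!j" using l by (auto simp: y_def)
        ultimately have "?\<chi>2 y = \<psi> i" using y1 by (auto simp: dsum_def)
        thus ?thesis using True by (simp add: y_def)
      next
        case False thus ?thesis using s2 by (simp add: is_state_def)
      qed
    qed
    ultimately show ?thesis by simp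
  qed
  have "(cmod (complex_of_real (sqrt p)))\<^sup>2 = p" "(cmod (complex_of_real (sqrt (1-p))))\<^sup>2 = 1 - p"
    using p by auto
  hence "p * E ?D (proj ?\<chi>1) + (1-p) * E ?D (proj ?\<chi>2) \<le> E ?D (proj ?\<Phi>)" using m by simp
  moreover have "p * E d (proj \<phi>) \<le> p * E ?D (proj ?\<chi>1)" using r1 p by (intro mult_left_mono) auto
  moreover have "(1-p) * E d' (proj \<psi>) \<le> (1-p) * E ?D (proj ?\<chi>2)" using r2 p by (intro mult_left_mono) auto
  ultimately show ?thesis by linarith
qed

end


definition UU :: "nat \<Rightarrow> nat \<Rightarrow> nat \<Rightarrow> nat" where
  "UU a b y = (if y < a*a then y div a else if y < a*a+b*b then a + (y - a*a) div b
     else if y - (a*a+b*b) < a*b then (y - (a*a+b*b)) div b else a + (y - (a*a+b*b) - a*b) mod b)"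
definition VV :: "nat \<Rightarrow> nat \<Rightarrow> nat \<Rightarrow> nat" where
  "VV a b y = (if y < a*a then y mod a else if y < a*a+b*b then a + (y - a*a) mod b
     else if y - (a*a+b*b) < a*b then a + (y - (a*a+b*b)) mod b else (y - (a*a+b*b) - a*b) div b)"
definition TAU :: "nat \<Rightarrow> nat \<Rightarrow> nat \<Rightarrow> nat \<Rightarrow> nat" where
  "TAU a b u v = (if u < a \<and> v < a then u*a + v else if \<not> u < a \<and> \<not> v < a then a*a + (u-a)*b + (v-a)
     else if u < a then a*a+b*b + u*b + (v-a) else a*a+b*b+a*b + v*b + (u-a))"

context fixes a b y :: nat assumes a: "0 < a" and b: "0 < b" and y: "y < a*a+b*b+2*(a*b)"
begin

lemma UV_bound: "UU a b y < a + b" "VV a b y < a + b"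
proof -
  consider "y < a*a" | "a*a \<le> y" "y < a*a+b*b" | "a*a+b*b \<le> y" "y - (a*a+b*b) < a*b"
    | "a*a+b*b \<le> y" "\<not> y - (a*a+b*b) < a*b" by linarith
  then have "UU a b y < a + b \<and> VV a b y < a + b"
  proof cases
    case 1
    have "y div a < a + b" using 1 by (simp add: less_mult_imp_div_less trans_less_add1)
    moreover have "y mod a < a + b" using a by (simp add: trans_less_add1)
    ultimately show ?thesis using 1 by (simp add: UU_def VV_def)
  next
    case 2
    have "(y - a*a) div b < b" using 2 by (intro less_mult_imp_div_less) linarith
    moreover have "(y - a*a) mod b < b" using b by simp
    ultimately show ?thesis using 2 by (simp add: UU_def VV_def)
  next
    case 3
    have "(y - (a*a+b*b)) div b < a" using 3 by (intro less_mult_imp_div_less) simp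
    moreover have "(y - (a*a+b*b)) mod b < b" using b by simp
    ultimately show ?thesis using 3 by (simp add: UU_def VV_def)
  next
    case 4
    have "(y - (a*a+b*b) - a*b) div b < a" using 4 y by (intro less_mult_imp_div_less) (simp add: algebra_simps)
    moreover have "(y - (a*a+b*b) - a*b) mod b < b" using b by simp
    ultimately show ?thesis using 4 by (simp add: UU_def VV_def)
  qed
  thus "UU a b y < a + b" "VV a b y < a + b" by auto
qed

lemma TAU_UV: "TAU a b (UU a b y) (VV a b y) = y"
proof -
  consider "y < a*a" | "a*a \<le> y" "y < a*a+b*b" | "a*a+b*b \<le> y" "y - (a*a+b*b) < a*b"
    | "a*a+b*b \<le> y" "\<not> y - (a*a+b*b) < a*b" by linarith
  then show ?thesis
  proof cases
    case 1
    have "y div a < a" using 1 by (simp add: less_mult_imp_div_less)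
    moreover have "y mod a < a" using a by simp
    ultimately show ?thesis using 1 by (simp add: UU_def VV_def TAU_def mult.commute)
  next
    case 2
    have "(y - a*a) div b * b + (y - a*a) mod b = y - a*a" by simp
    thus ?thesis using 2 by (simp add: UU_def VV_def TAU_def)
  next
    case 3
    have "(y - (a*a+b*b)) div b < a" using 3 by (intro less_mult_imp_div_less) simp
    moreover have "(y - (a*a+b*b)) div b * b + (y - (a*a+b*b)) mod b = y - (a*a+b*b)" by simp
    ultimately show ?thesis using 3 by (simp add: UU_def VV_def TAU_def)
  next
    case 4
    have "(y - (a*a+b*b) - a*b) div b < a" using 4 y by (intro less_mult_imp_div_less) (simp add: algebra_simps)
    moreover have "(y - (a*a+b*b) - a*b) div b * b + (y - (a*a+b*b) - a*b) mod b = y - (a*a+b*b) - a*b" by simp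
    ultimately show ?thesis using 4 by (simp add: UU_def VV_def TAU_def)
  qed
qed

lemma blocks: obtains "y < a*a" | "a*a \<le> y" "y < a*a+b*b" | "a*a+b*b \<le> y" "y - (a*a+b*b) < a*b"
    | "a*a+b*b \<le> y" "\<not> y - (a*a+b*b) < a*b" by linarith

lemma F1: "y < a*a \<longleftrightarrow> UU a b y < a \<and> VV a b y < a"
proof (cases rule: blocks)
  case 1
  thus ?thesis using a by (simp add: UU_def VV_def less_mult_imp_div_less)
qed (auto simp: UU_def VV_def)

lemma F2: "y < a*a+b*b \<longleftrightarrow> (UU a b y < a \<longleftrightarrow> VV a b y < a)"
proof (cases rule: blocks)
  case 1
  thus ?thesis using a by (simp add: UU_def VV_def less_mult_imp_div_less)
next
  case 3
  have "(y - (a*a+b*b)) div b < a" using 3 by (intro less_mult_imp_div_less) simp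
  thus ?thesis using 3 by (simp add: UU_def VV_def)
next
  case 4
  have "(y - (a*a+b*b) - a*b) div b < a" using 4 y by (intro less_mult_imp_div_less) (simp add: algebra_simps)
  thus ?thesis using 4 by (simp add: UU_def VV_def)
qed (auto simp: UU_def VV_def)

lemma F3: "a*a+b*b \<le> y \<Longrightarrow> (y-(a*a+b*b)) div (a*b) = (if UU a b y < a then 0 else 1)"
proof (cases rule: blocks)
  case 3
  have "(y - (a*a+b*b)) div b < a" using 3 by (intro less_mult_imp_div_less) simp
  thus ?thesis using 3 by (simp add: UU_def div_less)
next
  case 4
  have w: "a*b \<le> y - (a*a+b*b)" "y - (a*a+b*b) < 2*(a*b)" using 4 y by auto
  have "(y-(a*a+b*b)) div (a*b) = 1"
  proof -
    have "y-(a*a+b*b) = 1*(a*b) + (y-(a*a+b*b) - a*b)" using w by simp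
    moreover have "y-(a*a+b*b) - a*b < a*b" using w by simp
    ultimately show ?thesis by (metis div_mult_self3 div_less add.commute a b mult_pos_pos add_0 not_gr_zero)
  qed
  thus ?thesis using 4 by (simp add: UU_def)
qed auto

lemma V0: "y < a*a \<Longrightarrow> y div a = UU a b y \<and> y mod a = VV a b y"
  by (simp add: UU_def VV_def)

lemma V1: "a*a \<le> y \<Longrightarrow> y < a*a+b*b \<Longrightarrow> (y-a*a) div b = UU a b y - a \<and> (y-a*a) mod b = VV a b y - a"
  by (simp add: UU_def VV_def)

lemma V2: assumes "a*a+b*b \<le> y" "UU a b y < a" shows "
   (y-(a*a+b*b)) mod (a*b) div b = UU a b y \<and> (y-(a*a+b*b)) mod (a*b) mod b = VV a b y - a"
proof (cases rule: blocks)
  case 3 thus ?thesis by (simp add: UU_def VV_def)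
next
  case 4 thus ?thesis using assms by (simp add: UU_def)
qed (use assms in auto)

lemma V3: assumes "a*a+b*b \<le> y" "\<not> UU a b y < a" shows "
   (y-(a*a+b*b)) mod (a*b) div b = VV a b y \<and> (y-(a*a+b*b)) mod (a*b) mod b = UU a b y - a"
proof (cases rule: blocks)
  case 3
  have "(y - (a*a+b*b)) div b < a" using 3 by (intro less_mult_imp_div_less) simp
  thus ?thesis using 3 assms by (simp add: UU_def)
next
  case 4
  have w: "a*b \<le> y - (a*a+b*b)" "y - (a*a+b*b) < 2*(a*b)" using 4 y by auto
  have "(y-(a*a+b*b)) mod (a*b) = y-(a*a+b*b) - a*b"
  proof -
    have "y-(a*a+b*b) = (y-(a*a+b*b) - a*b) + 1*(a*b)" using w by simp
    moreover have "y-(a*a+b*b) - a*b < a*b" using w by simp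
    ultimately show ?thesis by (metis mod_mult_self1 mod_less)
  qed
  thus ?thesis using 4 by (simp add: UU_def VV_def)
qed (use assms in auto)

end


lemma divmod_split: fixes u v n :: nat assumes "v < n" shows "(u*n + v) div n = u" "(u*n + v) mod n = v"
  using assms by (simp_all add: add.commute[of "u*n"])

lemma sig_inj:
  fixes a b :: nat assumes a: "0 < a" and b: "0 < b"
  shows "inj_on (\<lambda>y. UU a b y * (a+b) + VV a b y) {..<a*a+b*b+2*(a*b)}"
proof (rule inj_onI)
  fix x y assume x: "x \<in> {..<a*a+b*b+2*(a*b)}" and y: "y \<in> {..<a*a+b*b+2*(a*b)}"
    and eq: "UU a b x * (a+b) + VV a b x = UU a b y * (a+b) + VV a b y"
  have bx: "VV a b x < a + b" "VV a b y < a + b" using UV_bound a b x y by auto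
  have "(UU a b x * (a+b) + VV a b x) div (a+b) = UU a b x" using bx by (simp add: divmod_split)
  moreover have "(UU a b y * (a+b) + VV a b y) div (a+b) = UU a b y" using bx by (simp add: divmod_split)
  ultimately have u: "UU a b x = UU a b y" using eq by simp
  hence v: "VV a b x = VV a b y" using eq by simp
  have "x = TAU a b (UU a b x) (VV a b x)" using TAU_UV a b x by auto
  also have "\<dots> = TAU a b (UU a b y) (VV a b y)" using u v by simp
  also have "\<dots> = y" using TAU_UV a b y by auto
  finally show "x = y" .
qed

lemma sig_bound:
  fixes a b :: nat assumes a: "0 < a" and b: "0 < b" and y: "y < a*a+b*b+2*(a*b)"
  shows "UU a b y * (a+b) + VV a b y < (a+b)*(a+b)"
proof -
  have bx: "UU a b y < a + b" "VV a b y < a + b" using UV_bound a b y by auto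
  have "UU a b y * (a+b) + VV a b y < UU a b y * (a+b) + (a+b)" using bx by simp
  also have "\<dots> = (UU a b y + 1) * (a+b)" by simp
  also have "\<dots> \<le> (a+b)*(a+b)" using bx by (intro mult_right_mono) auto
  finally show ?thesis .
qed



lemma dsum_first: "i \<in> basis (dsum_dims d d') \<Longrightarrow> \<forall>j<length d. i!j < d!j \<Longrightarrow> dsum d d' a \<phi> b \<psi> i = a * \<phi> i"
  by (simp add: dsum_def)
lemma dsum_second: "i \<in> basis (dsum_dims d d') \<Longrightarrow> \<forall>j<length d. d!j \<le> i!j \<Longrightarrow> 0 < length d \<Longrightarrow>
   dsum d d' a \<phi> b \<psi> i = b * \<psi> (map2 (-) i d)"
  unfolding dsum_def by (metis not_le)
lemma dsum_zero: assumes "\<not> (\<forall>j<length d. i!j < d!j)" "\<not> (\<forall>j<length d. d!j \<le> i!j)" shows "dsum d d' a \<phi> b \<psi> i = 0"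
  unfolding dsum_def using assms by (simp only: if_False if_cancel)
lemma tensor_val: "i \<in> basis (tensor_dims d1 d2) \<Longrightarrow> tensor d1 d2 \<phi>1 \<phi>2 i = \<phi>1 (map2 (div) i d2) * \<phi>2 (map2 (mod) i d2)"
  by (simp add: tensor_def)
lemma len_td [simp]: "length (tensor_dims d1 d2) = min (length d1) (length d2)" by (simp add: tensor_dims_def)
lemma len_dd [simp]: "length (dsum_dims d1 d2) = min (length d1) (length d2)" by (simp add: dsum_dims_def)
lemma nth_td [simp]: "j < length d1 \<Longrightarrow> j < length d2 \<Longrightarrow> tensor_dims d1 d2 ! j = d1!j * d2!j" by (simp add: tensor_dims_def)
lemma nth_dd [simp]: "j < length d1 \<Longrightarrow> j < length d2 \<Longrightarrow> dsum_dims d1 d2 ! j = d1!j + d2!j" by (simp add: dsum_dims_def)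

lemma sqrt_facts:
  fixes p :: real assumes "0 \<le> p" "p \<le> 1"
  defines "s \<equiv> p\<^sup>2 + (1-p)\<^sup>2"
  shows "sqrt s * sqrt (p\<^sup>2 / s) = p" "sqrt s * sqrt (1 - p\<^sup>2 / s) = 1 - p"
    "sqrt (1 - s) * (1 / sqrt 2) = sqrt p * sqrt (1 - p)" "0 < s"
proof -
  have s0: "0 < s"
  proof (cases "p = 0")
    case True thus ?thesis by (simp add: s_def)
  next
    case False thus ?thesis using assms by (simp add: s_def add_pos_nonneg)
  qed
  show "0 < s" by (fact s0)
  have "sqrt s * sqrt (p\<^sup>2 / s) = sqrt (p\<^sup>2)" using s0 by (simp add: real_sqrt_mult[symmetric])
  thus "sqrt s * sqrt (p\<^sup>2 / s) = p" using assms by simp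
  have "1 - p\<^sup>2 / s = (1-p)\<^sup>2 / s" using s0 by (simp add: field_simps s_def)
  hence "sqrt s * sqrt (1 - p\<^sup>2 / s) = sqrt ((1-p)\<^sup>2)" using s0 by (simp add: real_sqrt_mult[symmetric])
  thus "sqrt s * sqrt (1 - p\<^sup>2 / s) = 1 - p" using assms by simp
  have "1 - s = 2 * (p * (1-p))" by (simp add: s_def power2_eq_square algebra_simps)
  hence "sqrt (1 - s) = sqrt 2 * (sqrt p * sqrt (1-p))" by (simp add: real_sqrt_mult)
  thus "sqrt (1 - s) * (1 / sqrt 2) = sqrt p * sqrt (1 - p)" by simp
qed



lemma target_eq:
  fixes p :: real
  assumes l: "length d = k" "length d' = k" and k0: "0 < k" and pos: "\<forall>j<k. 0 < d!j \<and> 0 < d'!j"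
    and p: "0 \<le> p" "p \<le> 1"
    and iB: "i \<in> basis (dsum_dims (dsum_dims (tensor_dims d d) (tensor_dims d' d')) (tensor_dims (replicate k 2) (tensor_dims d d')))"
  defines "s \<equiv> p\<^sup>2 + (1-p)\<^sup>2"
  shows "dsum (dsum_dims (tensor_dims d d) (tensor_dims d' d')) (tensor_dims (replicate k 2) (tensor_dims d d'))
      (complex_of_real (sqrt s))
      (dsum (tensor_dims d d) (tensor_dims d' d') (complex_of_real (sqrt (p\<^sup>2/s))) (tensor d d \<phi> \<phi>)
            (complex_of_real (sqrt (1 - p\<^sup>2/s))) (tensor d' d' \<psi> \<psi>))
      (complex_of_real (sqrt (1 - s)))
      (tensor (replicate k 2) (tensor_dims d d') (ghz k) (tensor d d' \<phi> \<psi>)) i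
    = tensor (dsum_dims d d') (dsum_dims d d')
        (dsum d d' (complex_of_real (sqrt p)) \<phi> (complex_of_real (sqrt (1-p))) \<psi>)
        (dsum d d' (complex_of_real (sqrt p)) \<phi> (complex_of_real (sqrt (1-p))) \<psi>)
        (map (\<lambda>j. UU (d!j) (d'!j) (i!j) * (d!j + d'!j) + VV (d!j) (d'!j) (i!j)) [0..<k])"
  (is "?L = ?R")
proof -
  define U where "U = (\<lambda>j. UU (d!j) (d'!j) (i!j))"
  define V where "V = (\<lambda>j. VV (d!j) (d'!j) (i!j))"
  define Uv where "Uv = map U [0..<k]"
  define Vv where "Vv = map V [0..<k]"
  define \<Phi> where "\<Phi> = dsum d d' (complex_of_real (sqrt p)) \<phi> (complex_of_real (sqrt (1-p))) \<psi>"
  define AD where "AD = dsum_dims (tensor_dims d d) (tensor_dims d' d')"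
  define BD where "BD = tensor_dims (replicate k 2) (tensor_dims d d')"
  define D0 where "D0 = dsum_dims d d'"
  have lAD: "length AD = k" and lBD: "length BD = k" and lD0: "length D0 = k"
    using l by (auto simp: AD_def BD_def D0_def)
  have li: "length i = k" using iB l by (simp add: basis_def)
  have yb: "i!j < d!j*d!j + d'!j*d'!j + 2*(d!j*d'!j)" if "j < k" for j
    using iB that l by (simp add: basis_def)
  have ab: "0 < d!j" "0 < d'!j" if "j < k" for j using pos that by auto
  have Ub: "U j < d!j + d'!j" "V j < d!j + d'!j" if "j < k" for j
    using UV_bound[OF ab(1)[OF that] ab(2)[OF that] yb[OF that]] by (auto simp: U_def V_def)
  have xB: "map (\<lambda>j. U j * (d!j + d'!j) + V j) [0..<k] \<in> basis (tensor_dims D0 D0)"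
    using sig_bound[OF ab(1) ab(2) yb] l by (auto simp: basis_def D0_def U_def V_def)
  have xdiv: "map2 (div) (map (\<lambda>j. U j * (d!j + d'!j) + V j) [0..<k]) D0 = Uv"
    using Ub l by (intro nth_equalityI) (auto simp: Uv_def D0_def divmod_split)
  have xmod: "map2 (mod) (map (\<lambda>j. U j * (d!j + d'!j) + V j) [0..<k]) D0 = Vv"
    using Ub l by (intro nth_equalityI) (auto simp: Vv_def D0_def divmod_split)
  have R: "?R = \<Phi> Uv * \<Phi> Vv"
    using tensor_val[OF xB] xdiv xmod by (simp add: \<Phi>_def D0_def U_def V_def)
  have UvB: "Uv \<in> basis D0" "Vv \<in> basis D0" using Ub l by (auto simp: basis_def Uv_def Vv_def D0_def)
  have PhiU: "\<Phi> Uv = (if \<forall>j<k. U j < d!j then complex_of_real (sqrt p) * \<phi> Uv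
      else if \<forall>j<k. \<not> U j < d!j then complex_of_real (sqrt (1-p)) * \<psi> (map2 (-) Uv d) else 0)"
  proof -
    have e1: "(\<forall>j<length d. Uv!j < d!j) = (\<forall>j<k. U j < d!j)" using l by (auto simp: Uv_def)
    have e2: "(\<forall>j<length d. d!j \<le> Uv!j) = (\<forall>j<k. \<not> U j < d!j)" using l by (auto simp: Uv_def not_less)
    show ?thesis using UvB(1) e1 e2 l k0 unfolding \<Phi>_def D0_def
      by (auto simp: dsum_first dsum_second dsum_zero simp del: )
  qed
  have PhiV: "\<Phi> Vv = (if \<forall>j<k. V j < d!j then complex_of_real (sqrt p) * \<phi> Vv
      else if \<forall>j<k. \<not> V j < d!j then complex_of_real (sqrt (1-p)) * \<psi> (map2 (-) Vv d) else 0)"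
  proof -
    have e1: "(\<forall>j<length d. Vv!j < d!j) = (\<forall>j<k. V j < d!j)" using l by (auto simp: Vv_def)
    have e2: "(\<forall>j<length d. d!j \<le> Vv!j) = (\<forall>j<k. \<not> V j < d!j)" using l by (auto simp: Vv_def not_less)
    show ?thesis using UvB(2) e1 e2 l k0 unfolding \<Phi>_def D0_def
      by (auto simp: dsum_first dsum_second dsum_zero simp del: )
  qed
  have F1: "i!j < d!j*d!j \<longleftrightarrow> U j < d!j \<and> V j < d!j" if "j < k" for j
    using F1[OF ab(1)[OF that] ab(2)[OF that] yb[OF that]] by (simp add: U_def V_def)
  have F2: "i!j < d!j*d!j + d'!j*d'!j \<longleftrightarrow> (U j < d!j \<longleftrightarrow> V j < d!j)" if "j < k" for j
    using F2[OF ab(1)[OF that] ab(2)[OF that] yb[OF that]] by (simp add: U_def V_def)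
  have F3: "(i!j - (d!j*d!j + d'!j*d'!j)) div (d!j*d'!j) = (if U j < d!j then 0 else 1)"
    if "j < k" "d!j*d!j + d'!j*d'!j \<le> i!j" for j
    using F3[OF ab(1)[OF that(1)] ab(2)[OF that(1)] yb[OF that(1)] that(2)] by (simp add: U_def)
  have V0: "i!j div d!j = U j \<and> i!j mod d!j = V j" if "j < k" "i!j < d!j*d!j" for j
    using V0[OF ab(1)[OF that(1)] ab(2)[OF that(1)] yb[OF that(1)] that(2)] by (simp add: U_def V_def)
  have V1: "(i!j - d!j*d!j) div d'!j = U j - d!j \<and> (i!j - d!j*d!j) mod d'!j = V j - d!j"
    if "j < k" "d!j*d!j \<le> i!j" "i!j < d!j*d!j + d'!j*d'!j" for j
    using V1[OF ab(1)[OF that(1)] ab(2)[OF that(1)] yb[OF that(1)] that(2) that(3)] by (simp add: U_def V_def)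
  have V2: "(i!j - (d!j*d!j + d'!j*d'!j)) mod (d!j*d'!j) div d'!j = U j \<and>
      (i!j - (d!j*d!j + d'!j*d'!j)) mod (d!j*d'!j) mod d'!j = V j - d!j"
    if "j < k" "d!j*d!j + d'!j*d'!j \<le> i!j" "U j < d!j" for j
    using V2[OF ab(1)[OF that(1)] ab(2)[OF that(1)] yb[OF that(1)] that(2)] that(3) by (simp add: U_def V_def)
  have V3: "(i!j - (d!j*d!j + d'!j*d'!j)) mod (d!j*d'!j) div d'!j = V j \<and>
      (i!j - (d!j*d!j + d'!j*d'!j)) mod (d!j*d'!j) mod d'!j = U j - d!j"
    if "j < k" "d!j*d!j + d'!j*d'!j \<le> i!j" "\<not> U j < d!j" for j
    using V3[OF ab(1)[OF that(1)] ab(2)[OF that(1)] yb[OF that(1)] that(2)] that(3) by (simp add: U_def V_def)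
  have iAD: "i \<in> basis AD" if "\<forall>j<k. i!j < d!j*d!j + d'!j*d'!j" using that li l by (auto simp: basis_def AD_def)
  have condA: "(\<forall>j<length AD. i!j < AD!j) = (\<forall>j<k. i!j < d!j*d!j + d'!j*d'!j)" using l by (auto simp: AD_def)
  have condB: "(\<forall>j<length AD. AD!j \<le> i!j) = (\<forall>j<k. d!j*d!j + d'!j*d'!j \<le> i!j)" using l by (auto simp: AD_def)
  have iBB: "i \<in> basis (dsum_dims AD BD)" using iB by (simp add: AD_def BD_def)
  define Av where "Av = dsum (tensor_dims d d) (tensor_dims d' d') (complex_of_real (sqrt (p\<^sup>2/s))) (tensor d d \<phi> \<phi>)
            (complex_of_real (sqrt (1 - p\<^sup>2/s))) (tensor d' d' \<psi> \<psi>)"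
  define Bv where "Bv = tensor (replicate k 2) (tensor_dims d d') (ghz k) (tensor d d' \<phi> \<psi>)"
  have L: "?L = dsum AD BD (complex_of_real (sqrt s)) Av (complex_of_real (sqrt (1 - s))) Bv i"
    by (simp add: AD_def BD_def Av_def Bv_def)
  define wB where "wB = map2 (-) i AD"
  have lwB: "length wB = k" using li lAD by (simp add: wB_def)
  have wBj: "wB!j = i!j - (d!j*d!j + d'!j*d'!j)" if "j < k" for j using that li l by (simp add: wB_def AD_def)
  have wBB: "wB \<in> basis BD" if hyp: "\<forall>j<k. d!j*d!j + d'!j*d'!j \<le> i!j"
  proof -
    have "wB!j < 2 * (d!j * d'!j)" if jk: "j < k" for j using yb[OF jk] wBj[OF jk] hyp jk by auto
    thus ?thesis using lwB l by (auto simp: basis_def BD_def)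
  qed
  have Bval: "Bv wB = ghz k (map2 (div) wB (tensor_dims d d')) * tensor d d' \<phi> \<psi> (map2 (mod) wB (tensor_dims d d'))"
    if "\<forall>j<k. d!j*d!j + d'!j*d'!j \<le> i!j"
    using tensor_val[OF wBB[OF that, unfolded BD_def]] by (simp add: Bv_def)
  have gB: "map2 (div) wB (tensor_dims d d') = map (\<lambda>j. if U j < d!j then 0 else 1) [0..<k]"
    if "\<forall>j<k. d!j*d!j + d'!j*d'!j \<le> i!j"
    using that lwB l F3 wBj by (intro nth_equalityI) auto
  have uB: "map2 (mod) wB (tensor_dims d d') \<in> basis (tensor_dims d d')"
    using lwB l ab by (auto simp: basis_def intro!: mod_less_divisor)
  have phpsi: "tensor d d' \<phi> \<psi> (map2 (mod) wB (tensor_dims d d')) =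
     \<phi> (map2 (div) (map2 (mod) wB (tensor_dims d d')) d') * \<psi> (map2 (mod) (map2 (mod) wB (tensor_dims d d')) d')"
    by (rule tensor_val[OF uB])
  consider (c1) "\<forall>j<k. U j < d!j \<and> V j < d!j" | (c2) "\<forall>j<k. \<not> U j < d!j \<and> \<not> V j < d!j"
    | (c3) "\<forall>j<k. U j < d!j \<and> \<not> V j < d!j" | (c4) "\<forall>j<k. \<not> U j < d!j \<and> V j < d!j"
    | (c5) "\<not> ((\<forall>j<k. U j < d!j) \<or> (\<forall>j<k. \<not> U j < d!j)) \<or> \<not> ((\<forall>j<k. V j < d!j) \<or> (\<forall>j<k. \<not> V j < d!j))"
    by blast
  then show ?thesis
  proof cases
    case c1
    have lt: "\<forall>j<k. i!j < d!j*d!j + d'!j*d'!j" using c1 F2 by auto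
    have lt2: "\<forall>j<k. i!j < d!j*d!j" using c1 F1 by auto
    have idd: "i \<in> basis (tensor_dims d d)" using lt2 li l by (auto simp: basis_def)
    have md: "map2 (div) i d = Uv" "map2 (mod) i d = Vv" using lt2 V0 li l by (auto intro!: nth_equalityI simp: Uv_def Vv_def)
    have "Av i = complex_of_real (sqrt (p\<^sup>2/s)) * (\<phi> Uv * \<phi> Vv)"
      using dsum_first[OF iAD[OF lt, unfolded AD_def]] lt2 l idd md by (simp add: Av_def tensor_val)
    hence "?L = complex_of_real (sqrt s) * (complex_of_real (sqrt (p\<^sup>2/s)) * (\<phi> Uv * \<phi> Vv))"
      using L dsum_first[OF iBB] condA lt by simp
    also have "\<dots> = complex_of_real (sqrt s * sqrt (p\<^sup>2/s)) * (\<phi> Uv * \<phi> Vv)" by simp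
    also have "\<dots> = complex_of_real p * (\<phi> Uv * \<phi> Vv)"
      using sqrt_facts(1)[OF p] p by (simp add: s_def)
    also have "?R = (complex_of_real (sqrt p) * complex_of_real (sqrt p)) * (\<phi> Uv * \<phi> Vv)"
      using R PhiU PhiV c1 by (simp add: mult_ac)
    moreover have "complex_of_real (sqrt p) * complex_of_real (sqrt p) = complex_of_real p"
      using p by (simp flip: of_real_mult)
    ultimately show ?thesis by simp
  next
    case c2
    have lt: "\<forall>j<k. i!j < d!j*d!j + d'!j*d'!j" using c2 F2 by auto
    have ge2: "\<forall>j<k. d!j*d!j \<le> i!j" using c2 F1 by (auto simp: not_less[symmetric])
    define wA where "wA = map2 (-) i (tensor_dims d d)"
    have lwA: "length wA = k" using li l by (simp add: wA_def)
    have wAj: "wA!j = i!j - d!j*d!j" if "j < k" for j using that li l by (simp add: wA_def)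
    have wAB: "wA \<in> basis (tensor_dims d' d')"
    proof -
      have "wA!j < d'!j * d'!j" if jk: "j < k" for j
      proof -
        have "i!j < d!j*d!j + d'!j*d'!j" "d!j*d!j \<le> i!j" using lt ge2 jk by auto
        thus ?thesis using wAj[OF jk] by linarith
      qed
      thus ?thesis using lwA l by (auto simp: basis_def)
    qed
    have md: "map2 (div) wA d' = map2 (-) Uv d" "map2 (mod) wA d' = map2 (-) Vv d"
      using lt ge2 V1 lwA wAj l by (auto intro!: nth_equalityI simp: Uv_def Vv_def)
    have "Av i = complex_of_real (sqrt (1 - p\<^sup>2/s)) * (\<psi> (map2 (-) Uv d) * \<psi> (map2 (-) Vv d))"
    proof -
      have "Av i = complex_of_real (sqrt (1 - p\<^sup>2/s)) * tensor d' d' \<psi> \<psi> wA"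
        unfolding Av_def wA_def by (rule dsum_second[OF iAD[OF lt, unfolded AD_def]]) (use ge2 l k0 in auto)
      thus ?thesis using tensor_val[OF wAB] md by simp
    qed
    hence "?L = complex_of_real (sqrt s) * (complex_of_real (sqrt (1 - p\<^sup>2/s)) * (\<psi> (map2 (-) Uv d) * \<psi> (map2 (-) Vv d)))"
      using L dsum_first[OF iBB] condA lt by simp
    also have "\<dots> = complex_of_real (sqrt s * sqrt (1 - p\<^sup>2/s)) * (\<psi> (map2 (-) Uv d) * \<psi> (map2 (-) Vv d))" by simp
    also have "\<dots> = complex_of_real (1 - p) * (\<psi> (map2 (-) Uv d) * \<psi> (map2 (-) Vv d))"
      using sqrt_facts(2)[OF p] p by (simp add: s_def)
    also have "?R = (complex_of_real (sqrt (1-p)) * complex_of_real (sqrt (1-p))) * (\<psi> (map2 (-) Uv d) * \<psi> (map2 (-) Vv d))"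
      using R PhiU PhiV c2 k0 by (auto simp: mult_ac)
    moreover have "complex_of_real (sqrt (1-p)) * complex_of_real (sqrt (1-p)) = complex_of_real (1-p)"
      using p by (simp flip: of_real_mult)
    ultimately show ?thesis by simp

  next
    case c3
    have ge: "\<forall>j<k. d!j*d!j + d'!j*d'!j \<le> i!j" using c3 F2 by (auto simp: not_less[symmetric])
    have nlt: "\<not> (\<forall>j<length AD. i!j < AD!j)" using condA ge k0 by fastforce
    have g: "map2 (div) wB (tensor_dims d d') = replicate k 0" using gB[OF ge] c3 by (intro nth_equalityI) auto
    have gh: "ghz k (replicate k 0) = complex_of_real (1 / sqrt 2)" by (simp add: ghz_def)
    have md: "map2 (div) (map2 (mod) wB (tensor_dims d d')) d' = Uv"
      "map2 (mod) (map2 (mod) wB (tensor_dims d d')) d' = map2 (-) Vv d"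
      using ge c3 V2 lwB wBj l by (auto intro!: nth_equalityI simp: Uv_def Vv_def)
    have "?L = complex_of_real (sqrt (1 - s)) * Bv wB"
      using L dsum_second[OF iBB] condB ge l k0 lAD by (simp add: wB_def)
    also have "\<dots> = complex_of_real (sqrt (1 - s)) * (complex_of_real (1 / sqrt 2) * (\<phi> Uv * \<psi> (map2 (-) Vv d)))"
      using Bval[OF ge] g gh phpsi md by simp
    also have "\<dots> = complex_of_real (sqrt (1 - s) * (1 / sqrt 2)) * (\<phi> Uv * \<psi> (map2 (-) Vv d))"
      by (simp only: of_real_mult mult.assoc)
    also have "\<dots> = complex_of_real (sqrt p * sqrt (1 - p)) * (\<phi> Uv * \<psi> (map2 (-) Vv d))"
      using sqrt_facts(3)[OF p] by (simp add: s_def)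
    also have "\<dots> = ?R" using R PhiU PhiV c3 k0 by (auto simp: mult_ac)
    finally show ?thesis .

  next
    case c4
    have ge: "\<forall>j<k. d!j*d!j + d'!j*d'!j \<le> i!j" using c4 F2 by (auto simp: not_less[symmetric])
    have nlt: "\<not> (\<forall>j<length AD. i!j < AD!j)" using condA ge k0 by fastforce
    have g: "map2 (div) wB (tensor_dims d d') = replicate k 1" using gB[OF ge] c4 by (intro nth_equalityI) auto
    have gh: "ghz k (replicate k 1) = complex_of_real (1 / sqrt 2)" by (simp add: ghz_def)
    have md: "map2 (div) (map2 (mod) wB (tensor_dims d d')) d' = Vv"
      "map2 (mod) (map2 (mod) wB (tensor_dims d d')) d' = map2 (-) Uv d"
      using ge c4 V3 lwB wBj l by (auto intro!: nth_equalityI simp: Uv_def Vv_def)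
    have "?L = complex_of_real (sqrt (1 - s)) * Bv wB"
      using L dsum_second[OF iBB] condB ge l k0 lAD by (simp add: wB_def)
    also have "\<dots> = complex_of_real (sqrt (1 - s)) * (complex_of_real (1 / sqrt 2) * (\<phi> Vv * \<psi> (map2 (-) Uv d)))"
      using Bval[OF ge] g gh phpsi md by simp
    also have "\<dots> = complex_of_real (sqrt (1 - s) * (1 / sqrt 2)) * (\<phi> Vv * \<psi> (map2 (-) Uv d))"
      by (simp only: of_real_mult mult.assoc)
    also have "\<dots> = complex_of_real (sqrt p * sqrt (1 - p)) * (\<phi> Vv * \<psi> (map2 (-) Uv d))"
      using sqrt_facts(3)[OF p] by (simp add: s_def)
    also have "\<dots> = ?R" using R PhiU PhiV c4 k0 by (auto simp: mult_ac)
    finally show ?thesis .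

  next
    case c5
    have R0: "?R = 0" using R PhiU PhiV c5 by auto
    have "?L = 0"
    proof (cases "\<forall>j<k. i!j < d!j*d!j + d'!j*d'!j")
      case lt: True
      have eq: "\<forall>j<k. (U j < d!j \<longleftrightarrow> V j < d!j)" using lt F2 by auto
      have n1: "\<not> (\<forall>j<length (tensor_dims d d). i!j < tensor_dims d d ! j)"
      proof
        assume "\<forall>j<length (tensor_dims d d). i!j < tensor_dims d d ! j"
        hence "\<forall>j<k. i!j < d!j*d!j" using l by auto
        thus False using F1 c5 by auto
      qed
      have n2: "\<not> (\<forall>j<length (tensor_dims d d). tensor_dims d d ! j \<le> i!j)"
      proof
        assume "\<forall>j<length (tensor_dims d d). tensor_dims d d ! j \<le> i!j"
        hence "\<forall>j<k. \<not> i!j < d!j*d!j" using l by auto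
        hence "\<forall>j<k. \<not> U j < d!j \<and> \<not> V j < d!j"
        proof (intro allI impI)
          fix j assume h: "\<forall>j<k. \<not> i!j < d!j*d!j" and jk: "j < k"
          have "\<not> (U j < d!j \<and> V j < d!j)" using h jk F1[OF jk] by simp
          thus "\<not> U j < d!j \<and> \<not> V j < d!j" using eq jk by blast
        qed
        thus False using c5 k0 by auto
      qed
      have "Av i = 0" unfolding Av_def by (rule dsum_zero[OF n1 n2])
      thus ?thesis using L dsum_first[OF iBB] condA lt by simp
    next
      case nlt: False
      show ?thesis
      proof (cases "\<forall>j<k. d!j*d!j + d'!j*d'!j \<le> i!j")
        case ge: True
        have neq: "\<forall>j<k. \<not> (U j < d!j \<longleftrightarrow> V j < d!j)" using ge F2 by (auto simp: not_less[symmetric])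
        have "ghz k (map2 (div) wB (tensor_dims d d')) = 0"
        proof -
          have "map (\<lambda>j. if U j < d!j then 0 else 1) [0..<k] \<noteq> replicate k (0::nat)"
          proof
            assume "map (\<lambda>j. if U j < d!j then 0 else 1) [0..<k] = replicate k (0::nat)"
            hence "\<forall>j<k. U j < d!j"
            proof (intro allI impI)
              fix j assume h: "map (\<lambda>j. if U j < d!j then 0 else 1) [0..<k] = replicate k (0::nat)" and jk: "j < k"
              have "map (\<lambda>j. if U j < d!j then 0 else 1) [0..<k] ! j = replicate k (0::nat) ! j" using h by simp
              thus "U j < d!j" using jk by (simp split: if_splits)
            qed
            thus False using neq c5 by blast
          qed
          moreover have "map (\<lambda>j. if U j < d!j then 0 else 1) [0..<k] \<noteq> replicate k (1::nat)"
          proof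
            assume "map (\<lambda>j. if U j < d!j then 0 else 1) [0..<k] = replicate k (1::nat)"
            hence "\<forall>j<k. \<not> U j < d!j"
            proof (intro allI impI)
              fix j assume h: "map (\<lambda>j. if U j < d!j then 0 else 1) [0..<k] = replicate k (1::nat)" and jk: "j < k"
              have "map (\<lambda>j. if U j < d!j then 0 else 1) [0..<k] ! j = replicate k (1::nat) ! j" using h by simp
              thus "\<not> U j < d!j" using jk by (simp split: if_splits)
            qed
            thus False using neq c5 by blast
          qed
          ultimately show ?thesis using gB[OF ge] by (simp add: ghz_def)
        qed
        hence "Bv wB = 0" using Bval[OF ge] by simp
        thus ?thesis using L dsum_second[OF iBB] condB ge l k0 lAD by (simp add: wB_def)
      next
        case nge: False
        have "\<not> (\<forall>j<length AD. i!j < AD!j)" using condA nlt by simp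
        moreover have "\<not> (\<forall>j<length AD. AD!j \<le> i!j)" using condB nge by simp
        ultimately show ?thesis using L dsum_zero by metis
      qed
    qed
    thus ?thesis using R0 by simp

  qed
qed



lemma h0: "h 0 = 0" and h1: "h 1 = 0" by (simp_all add: h_def)

lemma h_identity:
  fixes p :: real assumes p: "0 \<le> p" "p \<le> 1"
  defines "s \<equiv> p\<^sup>2 + (1-p)\<^sup>2"
  shows "h s + s * h (p\<^sup>2 / s) + (1 - s) = 2 * h p"
proof (cases "p = 0 \<or> p = 1")
  case True
  thus ?thesis by (auto simp: s_def h_def)
next
  case False
  define q where "q = 1 - p"
  have pp: "0 < p" "0 < q" using p False by (auto simp: q_def)
  have s0: "0 < s" using pp by (simp add: s_def q_def[symmetric] add_pos_pos)
  have e1: "1 - s = 2 * p * q" by (simp add: s_def q_def power2_eq_square algebra_simps)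
  have e2: "1 - p\<^sup>2 / s = q\<^sup>2 / s" using s0 by (simp add: field_simps s_def q_def)
  have l1: "log 2 (1 - s) = 1 + log 2 p + log 2 q"
  proof -
    have "log 2 (1 - s) = log 2 (2 * p * q)" by (simp only: e1)
    also have "\<dots> = log 2 2 + log 2 p + log 2 q" using pp by (simp add: log_mult_pos)
    also have "\<dots> = 1 + log 2 p + log 2 q" by simp
    finally show ?thesis .
  qed
  have l2: "log 2 (p\<^sup>2 / s) = 2 * log 2 p - log 2 s" using pp s0 by (simp add: log_divide_pos log_nat_power)
  have l3: "log 2 (q\<^sup>2 / s) = 2 * log 2 q - log 2 s" using pp s0 by (simp add: log_divide_pos log_nat_power)
  have hs: "h s = - s * log 2 s - (2*p*q) * (1 + log 2 p + log 2 q)"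
    unfolding h_def unfolding l1 unfolding e1 by simp
  have hp': "h (p\<^sup>2 / s) = - (p\<^sup>2/s) * (2 * log 2 p - log 2 s) - (q\<^sup>2/s) * (2 * log 2 q - log 2 s)"
    unfolding h_def e2 l2 l3 by simp
  have sh: "s * h (p\<^sup>2 / s) = - p\<^sup>2 * (2 * log 2 p - log 2 s) - q\<^sup>2 * (2 * log 2 q - log 2 s)"
    using s0 by (simp add: hp' field_simps)
  have seq: "s = p\<^sup>2 + q\<^sup>2" by (simp add: s_def q_def)
  have hp: "h p = - p * log 2 p - q * log 2 q" by (simp add: h_def q_def)
  have pq: "p + q = 1" by (simp add: q_def)
  have "h s + s * h (p\<^sup>2 / s) + (1 - s) = (- s * log 2 s - (2*p*q) * (1 + log 2 p + log 2 q))
      + (- p\<^sup>2 * (2 * log 2 p - log 2 s) - q\<^sup>2 * (2 * log 2 q - log 2 s)) + 2 * p * q"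
    by (simp only: hs sh e1)
  also have "\<dots> = - 2 * p * log 2 p * (p + q) - 2 * q * log 2 q * (p + q) + log 2 s * (p\<^sup>2 + q\<^sup>2 - s)"
    by (simp add: algebra_simps power2_eq_square)
  also have "\<dots> = 2 * h p" using pq seq hp by simp
  finally show ?thesis .
qed

lemma h_sym: "h (1 - p) = h p" by (simp add: h_def algebra_simps)

lemma h_bound:
  fixes p :: real assumes p: "0 \<le> p" "p \<le> 1"
  shows "h p \<le> (3 / ln 2) * sqrt p"
proof (cases "p = 0 \<or> p = 1")
  case True thus ?thesis by (auto simp: h_def)
next
  case False
  hence pp: "0 < p" "p < 1" using p by auto
  have sp: "0 < sqrt p" using pp by simp
  have a: "- p * ln p \<le> 2 * sqrt p"
  proof -
    have "ln (1 / sqrt p) \<le> 1 / sqrt p - 1" using sp by (intro ln_le_minus_one) simp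
    moreover have "ln (1 / sqrt p) = - ln p / 2" using pp by (simp add: ln_div ln_sqrt)
    ultimately have "- ln p \<le> 2 / sqrt p - 2" by simp
    hence "p * (- ln p) \<le> p * (2 / sqrt p - 2)" using pp by (intro mult_left_mono) auto
    also have "\<dots> = 2 * sqrt p - 2 * p" using sp pp
      by (simp add: field_simps)
    finally show ?thesis using pp by simp
  qed
  have b: "- (1-p) * ln (1-p) \<le> sqrt p"
  proof -
    have q: "0 < 1 - p" using pp by simp
    have "ln (1 / (1-p)) \<le> 1 / (1-p) - 1" using q by (intro ln_le_minus_one) simp
    moreover have "ln (1 / (1-p)) = - ln (1-p)" using q by (simp add: ln_div)
    ultimately have "- ln (1-p) \<le> 1 / (1-p) - 1" by simp
    hence "(1-p) * (- ln (1-p)) \<le> (1-p) * (1 / (1-p) - 1)" using q by (intro mult_left_mono) auto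
    also have "\<dots> = p" using q by (simp add: field_simps)
    also have "p \<le> sqrt p"
    proof -
      have "sqrt p \<le> 1" using pp by simp
      hence "sqrt p * sqrt p \<le> sqrt p" using sp by (intro mult_left_le) auto
      thus ?thesis using pp by simp
    qed
    finally show ?thesis by (simp add: algebra_simps)
  qed
  have l2: "0 < ln (2::real)" by simp
  have "h p = (- p * ln p - (1-p) * ln (1-p)) / ln 2" by (simp add: h_def log_def diff_divide_distrib)
  also have "\<dots> \<le> (3 * sqrt p) / ln 2"
  proof (rule divide_right_mono)
    have a': "- (p * ln p) \<le> 2 * sqrt p" using a by simp
    have b': "- ((1-p) * ln (1-p)) \<le> sqrt p" using b by (simp only: mult_minus_left)
    show "- p * ln p - (1-p) * ln (1-p) \<le> 3 * sqrt p" using a' b' by linarith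
  qed (use l2 in auto)
  finally show ?thesis by simp
qed



context ent begin

lemma square_step:
  fixes p :: real
  assumes l: "length d = k" "length d' = k" and s1: "is_state d \<phi>" and s2: "is_state d' \<psi>"
    and p: "0 \<le> p" "p \<le> 1"
  defines "s \<equiv> p\<^sup>2 + (1-p)\<^sup>2"
  shows "E (dsum_dims (dsum_dims (tensor_dims d d) (tensor_dims d' d')) (tensor_dims (replicate k 2) (tensor_dims d d')))
     (proj (dsum (dsum_dims (tensor_dims d d) (tensor_dims d' d')) (tensor_dims (replicate k 2) (tensor_dims d d'))
      (complex_of_real (sqrt s))
      (dsum (tensor_dims d d) (tensor_dims d' d') (complex_of_real (sqrt (p\<^sup>2/s))) (tensor d d \<phi> \<phi>)
            (complex_of_real (sqrt (1 - p\<^sup>2/s))) (tensor d' d' \<psi> \<psi>))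
      (complex_of_real (sqrt (1 - s)))
      (tensor (replicate k 2) (tensor_dims d d') (ghz k) (tensor d d' \<phi> \<psi>))))
    \<le> 2 * E (dsum_dims d d') (proj (dsum d d' (complex_of_real (sqrt p)) \<phi> (complex_of_real (sqrt (1-p))) \<psi>))"
proof -
  define TG where "TG = dsum_dims (dsum_dims (tensor_dims d d) (tensor_dims d' d')) (tensor_dims (replicate k 2) (tensor_dims d d'))"
  define Tg where "Tg = dsum (dsum_dims (tensor_dims d d) (tensor_dims d' d')) (tensor_dims (replicate k 2) (tensor_dims d d'))
      (complex_of_real (sqrt s))
      (dsum (tensor_dims d d) (tensor_dims d' d') (complex_of_real (sqrt (p\<^sup>2/s))) (tensor d d \<phi> \<phi>)
            (complex_of_real (sqrt (1 - p\<^sup>2/s))) (tensor d' d' \<psi> \<psi>))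
      (complex_of_real (sqrt (1 - s)))
      (tensor (replicate k 2) (tensor_dims d d') (ghz k) (tensor d d' \<phi> \<psi>))"
  define D0 where "D0 = dsum_dims d d'"
  define \<Phi> where "\<Phi> = dsum d d' (complex_of_real (sqrt p)) \<phi> (complex_of_real (sqrt (1-p))) \<psi>"
  define \<sigma> where "\<sigma> = (\<lambda>j y. UU (d!j) (d'!j) y * (d!j + d'!j) + VV (d!j) (d'!j) y)"
  have k0: "0 < k" by (rule k_pos)
  have pos: "\<forall>j<k. 0 < d!j \<and> 0 < d'!j" using s1 s2 l state_dims_pos by auto
  have lD0: "length D0 = k" using l by (simp add: D0_def)
  have stP: "is_state D0 \<Phi>" unfolding D0_def \<Phi>_def by (rule dsum_state) (use l k0 s1 s2 p in auto)
  have stT: "is_state (tensor_dims D0 D0) (tensor D0 D0 \<Phi> \<Phi>)" by (rule tensor_state[OF _ stP stP]) simp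
  have lTG: "length TG = k" using l by (simp add: TG_def)
  have TGj: "TG!j = d!j*d!j + d'!j*d'!j + 2*(d!j*d'!j)" if "j < k" for j using that l by (simp add: TG_def)
  have TDj: "tensor_dims D0 D0 ! j = (d!j + d'!j) * (d!j + d'!j)" if "j < k" for j using that l by (simp add: D0_def)
  have TGTD: "TG!j = tensor_dims D0 D0 ! j" if "j < k" for j using TGj[OF that] TDj[OF that] by (simp add: algebra_simps)
  have sig: "\<forall>j<k. \<forall>c<TG!j. \<sigma> j c < tensor_dims D0 D0 ! j"
    using sig_bound pos TGj TDj by (auto simp: \<sigma>_def)
  have inj: "\<forall>j<k. inj_on (\<sigma> j) {..<TG!j}"
    using sig_inj pos TGj by (auto simp: \<sigma>_def)
  have img: "\<sigma> j ` {..<TG!j} = {..<TG!j}" if "j < k" for j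
    using endo_inj_surj[of "{..<TG!j}" "\<sigma> j"] sig inj TGTD that by auto
  have supp: "\<forall>i. tensor D0 D0 \<Phi> \<Phi> i \<noteq> 0 \<longrightarrow> (\<forall>j<k. i!j \<in> \<sigma> j ` {..<TG!j})"
  proof (intro allI impI)
    fix i j assume nz: "tensor D0 D0 \<Phi> \<Phi> i \<noteq> 0" and j: "j < k"
    hence "i \<in> basis (tensor_dims D0 D0)" using stT state_support by blast
    hence "i!j < tensor_dims D0 D0 ! j" using j lD0 by (auto simp: basis_def)
    thus "i!j \<in> \<sigma> j ` {..<TG!j}" using img[OF j] TGTD[OF j] by simp
  qed
  have r: "is_state TG (\<lambda>i. if i \<in> basis TG then tensor D0 D0 \<Phi> \<Phi> (map (\<lambda>j. \<sigma> j (i!j)) [0..<k]) else 0) \<and>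
     E TG (proj (\<lambda>i. if i \<in> basis TG then tensor D0 D0 \<Phi> \<Phi> (map (\<lambda>j. \<sigma> j (i!j)) [0..<k]) else 0)) \<le> E (tensor_dims D0 D0) (proj (tensor D0 D0 \<Phi> \<Phi>))"
    by (rule relabel_all[OF _ lTG stT sig inj supp]) (simp add: lD0)
  have eq: "(\<lambda>i. if i \<in> basis TG then tensor D0 D0 \<Phi> \<Phi> (map (\<lambda>j. \<sigma> j (i!j)) [0..<k]) else 0) = Tg"
  proof
    fix i show "(if i \<in> basis TG then tensor D0 D0 \<Phi> \<Phi> (map (\<lambda>j. \<sigma> j (i!j)) [0..<k]) else 0) = Tg i"
    proof (cases "i \<in> basis TG")
      case True
      show ?thesis using target_eq[OF l k0 pos p True[unfolded TG_def], of \<phi> \<psi>] True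
        by (simp add: Tg_def s_def D0_def \<Phi>_def \<sigma>_def)
    next
      case False thus ?thesis by (simp add: Tg_def dsum_def TG_def)
    qed
  qed
  have add: "E (tensor_dims D0 D0) (proj (tensor D0 D0 \<Phi> \<Phi>)) = E D0 (proj \<Phi>) + E D0 (proj \<Phi>)"
    by (rule additive[OF lD0 lD0 stP stP])
  show ?thesis using r eq add by (simp add: TG_def Tg_def D0_def \<Phi>_def)
qed

end


context ent begin

definition ex :: "real \<Rightarrow> nat list \<Rightarrow> nat list \<Rightarrow> mvec \<Rightarrow> mvec \<Rightarrow> real" where
  "ex p d d' \<phi> \<psi> = E (dsum_dims d d') (proj (dsum d d' (complex_of_real (sqrt p)) \<phi> (complex_of_real (sqrt (1-p))) \<psi>))
     - p * E d (proj \<phi>) - (1-p) * E d' (proj \<psi>) - h p"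

definition SS :: "real \<Rightarrow> real set" where
  "SS p = {ex p d d' \<phi> \<psi> | d d' \<phi> \<psi>. length d = k \<and> length d' = k \<and> is_state d \<phi> \<and> is_state d' \<psi>}"

definition Gf :: "real \<Rightarrow> real" where "Gf p = Inf (SS p)"

lemma SS_ne: "SS p \<noteq> {}"
proof -
  have "ex p (replicate k 2) (replicate k 2) (ghz k) (ghz k) \<in> SS p"
    using ghz_state[OF k_pos] unfolding SS_def by (intro CollectI exI[of _ "replicate k 2"] exI[of _ "ghz k"]) auto
  thus ?thesis by blast
qed

lemma SS_lb: assumes "0 \<le> p" "p \<le> 1" "x \<in> SS p" shows "- h p \<le> x"
proof -
  obtain d d' \<phi> \<psi> where x: "x = ex p d d' \<phi> \<psi>" "length d = k" "length d' = k" "is_state d \<phi>" "is_state d' \<psi>"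
    using assms(3) unfolding SS_def by blast
  show ?thesis using dsum_ge[OF x(2-5) assms(1,2)] x(1) by (simp add: ex_def)
qed

lemma SS_bdd: assumes "0 \<le> p" "p \<le> 1" shows "bdd_below (SS p)"
  using SS_lb[OF assms] by (auto simp: bdd_below_def)

lemma Gf_le: assumes "0 \<le> p" "p \<le> 1" "length d = k" "length d' = k" "is_state d \<phi>" "is_state d' \<psi>"
  shows "Gf p \<le> ex p d d' \<phi> \<psi>"
  unfolding Gf_def by (rule cInf_lower[OF _ SS_bdd[OF assms(1,2)]]) (use assms in \<open>auto simp: SS_def\<close>)

lemma Gf_ge: assumes "0 \<le> p" "p \<le> 1" shows "- h p \<le> Gf p"
  unfolding Gf_def by (rule cInf_greatest[OF SS_ne]) (rule SS_lb[OF assms])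

end


context ent begin

lemma ex_rec:
  fixes p :: real
  assumes l: "length d = k" "length d' = k" and s1: "is_state d \<phi>" and s2: "is_state d' \<psi>"
    and p: "0 \<le> p" "p \<le> 1"
  defines "s \<equiv> p\<^sup>2 + (1-p)\<^sup>2"
  shows "Gf s + s * Gf (p\<^sup>2 / s) \<le> 2 * ex p d d' \<phi> \<psi>"
proof -
  define q where "q = 1 - p"
  have s0: "0 < s" using sqrt_facts(4)[OF p] by (simp add: s_def)
  have sle: "s \<le> 1" "0 \<le> s"
  proof -
    have "1 - s = 2 * (p * q)" by (simp add: s_def q_def power2_eq_square algebra_simps)
    moreover have "0 \<le> p * q" using p by (simp add: q_def)
    ultimately show "s \<le> 1" by linarith
    show "0 \<le> s" using s0 by simp
  qed
  have p'r: "0 \<le> p\<^sup>2 / s" "p\<^sup>2 / s \<le> 1" using s0 by (auto simp: s_def)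
  define AD where "AD = dsum_dims (tensor_dims d d) (tensor_dims d' d')"
  define BD where "BD = tensor_dims (replicate k 2) (tensor_dims d d')"
  define Av where "Av = dsum (tensor_dims d d) (tensor_dims d' d') (complex_of_real (sqrt (p\<^sup>2/s))) (tensor d d \<phi> \<phi>)
            (complex_of_real (sqrt (1 - p\<^sup>2/s))) (tensor d' d' \<psi> \<psi>)"
  define Bv where "Bv = tensor (replicate k 2) (tensor_dims d d') (ghz k) (tensor d d' \<phi> \<psi>)"
  have st11: "is_state (tensor_dims d d) (tensor d d \<phi> \<phi>)" by (rule tensor_state[OF _ s1 s1]) simp
  have st22: "is_state (tensor_dims d' d') (tensor d' d' \<psi> \<psi>)" by (rule tensor_state[OF _ s2 s2]) simp
  have st12: "is_state (tensor_dims d d') (tensor d d' \<phi> \<psi>)" by (rule tensor_state[OF _ s1 s2]) (simp add: l)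
  have stg: "is_state (replicate k 2) (ghz k)" by (rule ghz_state[OF k_pos])
  have l11: "length (tensor_dims d d) = k" "length (tensor_dims d' d') = k" "length (tensor_dims d d') = k"
    using l by auto
  have stA: "is_state AD Av" unfolding AD_def Av_def
    by (rule dsum_state[OF _ _ st11 st22]) (use l11 k_pos p'r in auto)
  have stB: "is_state BD Bv" unfolding BD_def Bv_def by (rule tensor_state[OF _ stg st12]) (simp add: l)
  have lAD: "length AD = k" and lBD: "length BD = k" using l by (auto simp: AD_def BD_def)
  have sq: "E (dsum_dims AD BD) (proj (dsum AD BD (complex_of_real (sqrt s)) Av (complex_of_real (sqrt (1 - s))) Bv))
      \<le> 2 * E (dsum_dims d d') (proj (dsum d d' (complex_of_real (sqrt p)) \<phi> (complex_of_real (sqrt (1-p))) \<psi>))"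
    using square_step[OF l s1 s2 p] by (simp add: AD_def BD_def Av_def Bv_def s_def)
  have x1: "Gf s \<le> ex s AD BD Av Bv" by (rule Gf_le[OF sle(2) sle(1) lAD lBD stA stB])
  have x2: "Gf (p\<^sup>2/s) \<le> ex (p\<^sup>2/s) (tensor_dims d d) (tensor_dims d' d') (tensor d d \<phi> \<phi>) (tensor d' d' \<psi> \<psi>)"
    by (rule Gf_le[OF p'r l11(1,2) st11 st22])
  have eA: "E AD (proj Av) = ex (p\<^sup>2/s) (tensor_dims d d) (tensor_dims d' d') (tensor d d \<phi> \<phi>) (tensor d' d' \<psi> \<psi>)
     + (p\<^sup>2/s) * (2 * E d (proj \<phi>)) + (1 - p\<^sup>2/s) * (2 * E d' (proj \<psi>)) + h (p\<^sup>2/s)"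
    using additive[OF l(1) l(1) s1 s1] additive[OF l(2) l(2) s2 s2] by (simp add: ex_def AD_def Av_def)
  have eB: "E BD (proj Bv) = 1 + E d (proj \<phi>) + E d' (proj \<psi>)"
    using additive[OF _ l11(3) stg st12] additive[OF l s1 s2] ghz_one by (simp add: BD_def Bv_def)
  define ef where "ef = E d (proj \<phi>)"
  define eg where "eg = E d' (proj \<psi>)"
  define eA where "eA = E AD (proj Av)"
  define eB where "eB = E BD (proj Bv)"
  define xA where "xA = ex (p\<^sup>2/s) (tensor_dims d d) (tensor_dims d' d') (tensor d d \<phi> \<phi>) (tensor d' d' \<psi> \<psi>)"
  define hp' where "hp' = h (p\<^sup>2/s)"
  have c1: "s * (p\<^sup>2/s) = p\<^sup>2" "s * (1 - p\<^sup>2/s) = q\<^sup>2" using s0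
    by (auto simp: field_simps s_def q_def)
  have sA: "s * eA = s * xA + 2 * p\<^sup>2 * ef + 2 * q\<^sup>2 * eg + s * hp'"
  proof -
    have e: "eA = xA + (p\<^sup>2/s) * (2 * ef) + (1 - p\<^sup>2/s) * (2 * eg) + hp'"
      unfolding eA_def xA_def ef_def eg_def hp'_def by (rule eA)
    have "s * eA = s * xA + (s * (p\<^sup>2/s)) * (2 * ef) + (s * (1 - p\<^sup>2/s)) * (2 * eg) + s * hp'"
      by (simp only: e distrib_left mult.assoc)
    thus ?thesis using c1 by simp
  qed
  have sB: "(1 - s) * eB = 2 * p * q * (1 + ef + eg)"
  proof -
    have "1 - s = 2 * p * q" by (simp add: s_def q_def power2_eq_square algebra_simps)
    thus ?thesis using eB by (simp add: eB_def ef_def eg_def)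
  qed
  have hid: "h s + s * hp' + (1 - s) = 2 * h p" using h_identity[OF p] by (simp add: s_def hp'_def)
  have sx2: "s * Gf (p\<^sup>2/s) \<le> s * xA" using x2 sle(2) by (simp add: xA_def mult_left_mono)
  have x1': "Gf s \<le> E (dsum_dims AD BD) (proj (dsum AD BD (complex_of_real (sqrt s)) Av (complex_of_real (sqrt (1 - s))) Bv))
     - s * eA - (1 - s) * eB - h s" using x1 by (simp add: ex_def eA_def eB_def)
  have pq: "2 * p\<^sup>2 * ef + 2 * p * q * ef = 2 * p * ef" "2 * q\<^sup>2 * eg + 2 * p * q * eg = 2 * q * eg"
    by (simp_all add: q_def power2_eq_square algebra_simps)
  have goal: "2 * ex p d d' \<phi> \<psi> = 2 * E (dsum_dims d d') (proj (dsum d d' (complex_of_real (sqrt p)) \<phi> (complex_of_real (sqrt (1-p))) \<psi>))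
      - 2 * p * ef - 2 * q * eg - 2 * h p" by (simp add: ex_def ef_def eg_def q_def algebra_simps)
  have sB': "(1 - s) * eB = 2 * p * q + 2 * p * q * ef + 2 * p * q * eg" using sB by (simp add: algebra_simps)
  have s12: "1 - s = 2 * p * q" by (simp add: s_def q_def power2_eq_square algebra_simps)
  show ?thesis using sq x1' sA sB' hid sx2 pq goal s12 unfolding eA_def eB_def by linarith
qed

end


context ent begin

lemma Gf_rec:
  fixes p :: real assumes p: "0 \<le> p" "p \<le> 1"
  shows "Gf (p\<^sup>2 + (1-p)\<^sup>2) + (p\<^sup>2 + (1-p)\<^sup>2) * Gf (p\<^sup>2 / (p\<^sup>2 + (1-p)\<^sup>2)) \<le> 2 * Gf p"
proof -
  have "(Gf (p\<^sup>2 + (1-p)\<^sup>2) + (p\<^sup>2 + (1-p)\<^sup>2) * Gf (p\<^sup>2 / (p\<^sup>2 + (1-p)\<^sup>2))) / 2 \<le> Gf p"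
    unfolding Gf_def[of p]
  proof (rule cInf_greatest[OF SS_ne])
    fix x assume "x \<in> SS p"
    then obtain d d' \<phi> \<psi> where x: "x = ex p d d' \<phi> \<psi>" "length d = k" "length d' = k" "is_state d \<phi>" "is_state d' \<psi>"
      unfolding SS_def by blast
    show "(Gf (p\<^sup>2 + (1-p)\<^sup>2) + (p\<^sup>2 + (1-p)\<^sup>2) * Gf (p\<^sup>2 / (p\<^sup>2 + (1-p)\<^sup>2))) / 2 \<le> x"
      using ex_rec[OF x(2-5) p] x(1) by simp
  qed
  thus ?thesis by simp
qed

lemma Gf_nonneg:
  fixes p :: real assumes p: "0 \<le> p" "p \<le> 1"
  shows "0 \<le> Gf p"
proof -
  define C where "C = 3 / ln (2::real)"
  have C0: "0 < C" by (simp add: C_def)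
  have hb: "h x \<le> C * sqrt x" if "0 \<le> x" "x \<le> 1" for x using h_bound[OF that] by (simp add: C_def)
  have Gb: "- C \<le> Gf x" if "0 \<le> x" "x \<le> 1" for x
  proof -
    have "h x \<le> C * sqrt x" by (rule hb[OF that])
    also have "\<dots> \<le> C * 1" using that C0 by (intro mult_left_mono) auto
    finally show ?thesis using Gf_ge[OF that] by simp
  qed
  define g where "g = Inf (Gf ` {0..1})"
  have bdd: "bdd_below (Gf ` {0..1})" unfolding bdd_below_def using Gb by (intro exI[of _ "- C"]) auto
  have gle: "g \<le> Gf x" if "0 \<le> x" "x \<le> 1" for x
    unfolding g_def by (rule cInf_lower[OF _ bdd]) (use that in auto)
  have "0 \<le> g"
  proof (rule ccontr)
    assume "\<not> 0 \<le> g"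
    hence g0: "g < 0" by simp
    define \<epsilon> where "\<epsilon> = min (1/2) ((g / (2*C))\<^sup>2)"
    have e0: "0 < \<epsilon>" using g0 C0 by (simp add: \<epsilon>_def)
    have e1: "\<epsilon> \<le> 1/2" by (simp add: \<epsilon>_def)
    have se: "C * sqrt \<epsilon> \<le> - g / 2"
    proof -
      have "sqrt \<epsilon> \<le> sqrt ((g / (2*C))\<^sup>2)" by (rule real_sqrt_le_mono) (simp add: \<epsilon>_def)
      also have "\<dots> = - g / (2*C)" using g0 C0 by (simp add: abs_if divide_less_0_iff)
      finally have "C * sqrt \<epsilon> \<le> C * (- g / (2*C))" using C0 by (intro mult_left_mono) auto
      thus ?thesis using C0 by simp
    qed
    have all: "g * (1 - \<epsilon>/2) \<le> Gf x" if x: "0 \<le> x" "x \<le> 1" for x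
    proof -
      have half: "g / 2 \<ge> g * (1 - \<epsilon>/2)" using g0 e0 e1 by (simp add: mult_le_cancel_left_neg field_simps)
      consider "x \<le> \<epsilon>" | "1 - \<epsilon> \<le> x" | "\<epsilon> < x" "x < 1 - \<epsilon>" by linarith
      thus ?thesis
      proof cases
        case 1
        have "h x \<le> C * sqrt x" by (rule hb[OF x])
        also have "\<dots> \<le> C * sqrt \<epsilon>" using 1 C0 by (intro mult_left_mono) auto
        finally have "h x \<le> - g / 2" using se by simp
        thus ?thesis using Gf_ge[OF x] half by simp
      next
        case 2
        have "h x = h (1 - x)" by (simp add: h_sym)
        also have "\<dots> \<le> C * sqrt (1 - x)" using x by (intro hb) auto
        also have "\<dots> \<le> C * sqrt \<epsilon>" using 2 C0 by (intro mult_left_mono) auto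
        finally have "h x \<le> - g / 2" using se by simp
        thus ?thesis using Gf_ge[OF x] half by simp
      next
        case 3
        define s where "s = x\<^sup>2 + (1-x)\<^sup>2"
        have s0: "0 < s" using sqrt_facts(4)[OF x] by (simp add: s_def)
        have s1: "1 - s = 2 * (x * (1-x))" by (simp add: s_def power2_eq_square algebra_simps)
        have xx: "\<epsilon> * (1 - \<epsilon>) \<le> x * (1 - x)"
        proof -
          have "x * (1-x) - \<epsilon> * (1 - \<epsilon>) = (x - \<epsilon>) * ((1 - \<epsilon>) - x)" by (simp add: algebra_simps)
          also have "\<dots> \<ge> 0" using 3 by simp
          finally show ?thesis by simp
        qed
        have "\<epsilon> * (1/2) \<le> \<epsilon> * (1 - \<epsilon>)" using e0 e1 by (intro mult_left_mono) auto
        hence sle: "s \<le> 1 - \<epsilon>" using s1 xx by linarith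
        have sr: "0 \<le> s" "s \<le> 1" using s0 sle e0 by auto
        have pr: "0 \<le> x\<^sup>2 / s" "x\<^sup>2 / s \<le> 1" using s0 by (auto simp: s_def)
        have r: "Gf s + s * Gf (x\<^sup>2 / s) \<le> 2 * Gf x" using Gf_rec[OF x] by (simp add: s_def)
        have "s * g \<le> s * Gf (x\<^sup>2 / s)" using gle[OF pr] sr by (intro mult_left_mono) auto
        hence "g + s * g \<le> 2 * Gf x" using r gle[OF sr] by linarith
        moreover have "g * (2 - \<epsilon>) \<le> g + s * g"
        proof -
          have "g * (2 - \<epsilon>) \<le> g * (1 + s)" using g0 sle by (intro mult_left_mono_neg) auto
          thus ?thesis by (simp add: algebra_simps)
        qed
        ultimately show ?thesis by (simp add: field_simps)
      qed
    qed
    have "g * (1 - \<epsilon>/2) \<le> Inf (Gf ` {0..1})"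
      by (rule cInf_greatest) (use all in auto)
    hence "g * (1 - \<epsilon>/2) \<le> g" by (simp add: g_def)
    hence "0 \<le> g * \<epsilon>" by (simp add: algebra_simps)
    moreover have "g * \<epsilon> < 0" using g0 e0 by (simp add: mult_neg_pos)
    ultimately show False by simp
  qed
  thus ?thesis using gle[OF p] by simp
qed

end

theorem mainTheorem7:
  fixes E :: "nat list \<Rightarrow> mop \<Rightarrow> real" and k :: nat
    and d d' :: "nat list" and \<phi> \<psi> :: mvec and p :: real
  assumes k_pos: "0 < k"
    and additive: "\<And>d1 d2 \<phi>1 \<phi>2. length d1 = k \<Longrightarrow> length d2 = k \<Longrightarrow>
        is_state d1 \<phi>1 \<Longrightarrow> is_state d2 \<phi>2 \<Longrightarrow>
        E (tensor_dims d1 d2) (proj (tensor d1 d2 \<phi>1 \<phi>2)) = E d1 (proj \<phi>1) + E d2 (proj \<phi>2)"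
    and monotone: "\<And>d1 d2 T L X f P \<phi>0 \<chi>. length d1 = k \<Longrightarrow> locc d1 d2 T L \<Longrightarrow>
        is_state d1 \<phi>0 \<Longrightarrow> finite (X :: nat set) \<Longrightarrow> f ` T \<subseteq> X \<Longrightarrow>
        (\<And>x. x \<in> X \<Longrightarrow> is_state d2 (\<chi> x)) \<Longrightarrow>
        (\<And>x i i'. x \<in> X \<Longrightarrow>
            (\<Sum>t\<in>{t\<in>T. f t = x}. L t (proj \<phi>0) i i') = complex_of_real (P x) * proj (\<chi> x) i i') \<Longrightarrow>
        E d1 (proj \<phi>0) \<ge> (\<Sum>x\<in>X. P x * E d2 (proj (\<chi> x)))"
    and ghz_one: "E (replicate k 2) (proj (ghz k)) = 1"
    and "length d = k" and "length d' = k"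
    and "is_state d \<phi>" and "is_state d' \<psi>"
    and "0 \<le> p" and "p \<le> 1"
  shows "E (dsum_dims d d') (proj (dsum d d' (complex_of_real (sqrt p)) \<phi> (complex_of_real (sqrt (1 - p))) \<psi>))
           \<ge> p * E d (proj \<phi>) + (1 - p) * E d' (proj \<psi>) + h p"
proof -
  interpret ent E k
    by (unfold_locales) (fact k_pos additive monotone ghz_one)+
  have "Gf p \<le> ex p d d' \<phi> \<psi>" by (rule Gf_le) (use assms in auto)
  moreover have "0 \<le> Gf p" by (rule Gf_nonneg) (use assms in auto)
  ultimately have "0 \<le> ex p d d' \<phi> \<psi>" by simp
  thus ?thesis by (simp add: ex_def)
qed

end
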